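(* Let $N,M,k$ be positive integers with $M\le N$, $\omega=e^{2\pi i/N}$, and for $x,s\in\mathbb{Z}_N$ let $|\phi_{x,s}\rangle=\frac{1}{\sqrt M}\sum_{b=0}^{M-1}|b,x+bs\rangle\in\mathbb{C}^{N}\otimes\mathbb{C}^N$ and $\rho_s=\frac1N\sum_{x\in\mathbb{Z}_N}|\phi_{x,s}\rangle\langle\phi_{x,s}|$. Consider the pretty good measurement for the ensemble $\{\rho_s^{\otimes k}\}_{s\in\mathbb{Z}_N}$ with uniform prior, i.e. the POVM with elements $E_j=\Sigma^{-1/2}\rho_j^{\otimes k}\Sigma^{-1/2}$ where $\Sigma=\sum_{j\in\mathbb{Z}_N}\rho_j^{\otimes k}$ and the inverse square root is taken on the support of $\Sigma$. Then for every $s\in\mathbb{Z}_N$, $$\mathrm{tr}(E_s\rho_s^{\otimes k})=\frac{1}{M^kN^{k+1}}\sum_{x\in\mathbb{Z}_N^k}\Big(\sum_{w\in\mathbb{Z}_N}\sqrt{\eta^x_w}\Big)^2,$$ where $\eta^x_w:=|\{b\in\{0,\ldots,M-1\}^k : b\cdot x\equiv w \pmod N\}|$.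
   Context: The states $\rho_s$ arise from the generalized hidden shift problem: given $f:\{0,\ldots,M-1\}\times\mathbb{Z}_N\to S$, injective in $x$ for each fixed $b$, with $f(b,x)=f(b+1,x+s)$ for $b=0,\ldots,M-2$, one prepares the uniform superposition over $(b,x)$, computes $f$ and measures its value. Here $|b\rangle$ for $b\in\{0,\ldots,M-1\}$ are computational basis states of the first register. *)

theory Defs
  imports Complex_Main "Jordan_Normal_Form.Matrix"
begin

definition cadj :: "complex mat \<Rightarrow> complex mat" where
  "cadj A = mat (dim_col A) (dim_row A) (\<lambda>(i,j). cnj (A $$ (j,i)))"

definition tr :: "complex mat \<Rightarrow> complex" where
  "tr A = (\<Sum>i<dim_row A. A $$ (i,i))"

definition unitary_mat :: "nat \<Rightarrow> complex mat \<Rightarrow> bool" where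
  "unitary_mat n U \<longleftrightarrow> U \<in> carrier_mat n n \<and> cadj U * U = 1\<^sub>m n \<and> U * cadj U = 1\<^sub>m n"

definition inv_sqrt_supp :: "complex mat \<Rightarrow> complex mat" where
  "inv_sqrt_supp A = (SOME X. \<exists>U d. unitary_mat (dim_row A) U \<and>
       (\<forall>i. d i \<in> \<real>) \<and>
       A = U * mat_diag (dim_row A) d * cadj U \<and>
       X = U * mat_diag (dim_row A)
             (\<lambda>i. if Re (d i) > 0 then complex_of_real (1 / sqrt (Re (d i))) else 0) * cadj U)"

(* Kronecker (tensor) product; index of A \<otimes> B is (i * dim B + i') *)
definition kron :: "complex mat \<Rightarrow> complex mat \<Rightarrow> complex mat" where
  "kron A B = mat (dim_row A * dim_row B) (dim_col A * dim_col B)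
     (\<lambda>(i,j). A $$ (i div dim_row B, j div dim_col B) * B $$ (i mod dim_row B, j mod dim_col B))"

fun tpow :: "complex mat \<Rightarrow> nat \<Rightarrow> complex mat" where
  "tpow A 0 = 1\<^sub>m 1"
| "tpow A (Suc k) = kron A (tpow A k)"

(* |phi_{x,s}> in C^N \<otimes> C^N; basis vector |b,y> has index b*N + y *)
definition phi :: "nat \<Rightarrow> nat \<Rightarrow> nat \<Rightarrow> nat \<Rightarrow> complex vec" where
  "phi N M x s = vec (N * N) (\<lambda>i. if i div N < M \<and> i mod N = (x + (i div N) * s) mod N
                                  then complex_of_real (1 / sqrt (real M)) else 0)"

definition rho :: "nat \<Rightarrow> nat \<Rightarrow> nat \<Rightarrow> complex mat" where
  "rho N M s = mat (N * N) (N * N)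
     (\<lambda>(i,j). (1 / of_nat N) * (\<Sum>x<N. phi N M x s $ i * cnj (phi N M x s $ j)))"

definition Sigma :: "nat \<Rightarrow> nat \<Rightarrow> nat \<Rightarrow> complex mat" where
  "Sigma N M k = mat ((N * N) ^ k) ((N * N) ^ k)
     (\<lambda>(a,b). \<Sum>j<N. tpow (rho N M j) k $$ (a,b))"

definition pgm :: "nat \<Rightarrow> nat \<Rightarrow> nat \<Rightarrow> nat \<Rightarrow> complex mat" where
  "pgm N M k j = inv_sqrt_supp (Sigma N M k) * tpow (rho N M j) k * inv_sqrt_supp (Sigma N M k)"

definition eta :: "nat \<Rightarrow> nat \<Rightarrow> nat \<Rightarrow> nat list \<Rightarrow> nat \<Rightarrow> nat" where
  "eta N M k xs w = card {bs. length bs = k \<and> set bs \<subseteq> {..<M} \<and>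
                          (\<Sum>i<k. bs ! i * xs ! i) mod N = w}"

end

theory Submission
  imports Defs "Jordan_Normal_Form.Char_Poly"
begin

lemma index_mult_sum[simp]:
  "i < dim_row A \<Longrightarrow> j < dim_col B \<Longrightarrow> dim_col A = dim_row B \<Longrightarrow> (A * B) $$ (i,j) = (\<Sum>l<dim_row B. A $$ (i,l) * B $$ (l,j))"
  by (simp add: scalar_prod_def lessThan_atLeast0)

lemma index_mult_vec_sum[simp]:
  "i < dim_row A \<Longrightarrow> dim_col A = dim_vec v \<Longrightarrow> (A *\<^sub>v v) $ i = (\<Sum>l<dim_vec v. A $$ (i,l) * v $ l)"
  by (simp add: scalar_prod_def lessThan_atLeast0)

declare index_mult_mat(1)[simp del] index_mult_mat_vec[simp del]

lemma mult_entry: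
  assumes "A \<in> carrier_mat n m" "B \<in> carrier_mat m p" "i < n" "j < p"
  shows "(A * B) $$ (i,j) = (\<Sum>l<m. A $$ (i,l) * B $$ (l,j))"
  using assms by simp

lemma cadj_carrier[simp]: "A \<in> carrier_mat n m \<Longrightarrow> cadj A \<in> carrier_mat m n"
  by (simp add: cadj_def)

lemma cadj_dims[simp]: "dim_row (cadj A) = dim_col A" "dim_col (cadj A) = dim_row A"
  by (simp_all add: cadj_def)

lemma cadj_entry[simp]: "i < dim_col A \<Longrightarrow> j < dim_row A \<Longrightarrow> cadj A $$ (i,j) = cnj (A $$ (j,i))"
  by (simp add: cadj_def)

lemma cadj_mult:
  assumes "A \<in> carrier_mat n m" "B \<in> carrier_mat m p"
  shows "cadj (A * B) = cadj B * cadj A"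
proof (rule eq_matI)
  fix i j assume "i < dim_row (cadj B * cadj A)" "j < dim_col (cadj B * cadj A)"
  with assms have ij: "i < p" "j < n" by auto
  show "cadj (A * B) $$ (i, j) = (cadj B * cadj A) $$ (i, j)"
  proof -
    have "cadj (A * B) $$ (i, j) = cnj ((A * B) $$ (j,i))" using assms ij by simp
    also have "\<dots> = (\<Sum>l<m. cnj (B $$ (l,i)) * cnj (A $$ (j,l)))"
      using assms ij by (simp add: mult.commute)
    also have "\<dots> = (\<Sum>l<m. cadj B $$ (i,l) * cadj A $$ (l,j))"
      using assms ij by (intro sum.cong) auto
    also have "\<dots> = (cadj B * cadj A) $$ (i, j)"
      using assms ij by simp
    finally show ?thesis .
  qed
qed (use assms in auto)

lemma cadj_cadj[simp]: "cadj (cadj A) = A"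
  by (rule eq_matI) auto

lemma cadj_one[simp]: "cadj (1\<^sub>m n) = 1\<^sub>m n"
  by (rule eq_matI) auto

definition herm :: "nat \<Rightarrow> complex mat \<Rightarrow> bool" where
  "herm n A \<longleftrightarrow> A \<in> carrier_mat n n \<and> cadj A = A"

lemma hermD: "herm n A \<Longrightarrow> i < n \<Longrightarrow> j < n \<Longrightarrow> A $$ (i,j) = cnj (A $$ (j,i))"
proof -
  assume h: "herm n A" "i < n" "j < n"
  hence "A $$ (i,j) = cadj A $$ (i,j)" unfolding herm_def by simp
  also have "\<dots> = cnj (A $$ (j,i))" by (rule cadj_entry) (use h in \<open>auto simp: herm_def\<close>)
  finally show ?thesis .
qed

lemma hermI: "A \<in> carrier_mat n n \<Longrightarrow> (\<And>i j. i < n \<Longrightarrow> j < n \<Longrightarrow> A $$ (i,j) = cnj (A $$ (j,i))) \<Longrightarrow> herm n A"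
proof -
  assume a: "A \<in> carrier_mat n n" and h: "\<And>i j. i < n \<Longrightarrow> j < n \<Longrightarrow> A $$ (i,j) = cnj (A $$ (j,i))"
  have "cadj A = A"
  proof (rule eq_matI)
    fix i j assume "i < dim_row A" "j < dim_col A"
    with a have ij: "i < n" "j < n" by auto
    have "cadj A $$ (i,j) = cnj (A $$ (j,i))" using a ij by simp
    also have "\<dots> = A $$ (i,j)" using h[OF ij] by simp
    finally show "cadj A $$ (i,j) = A $$ (i,j)" .
  qed (use a in simp_all)
  with a show ?thesis unfolding herm_def by simp
qed

lemma diag_mult_vec:
  assumes "z \<in> carrier_vec n"
  shows "mat_diag n f *\<^sub>v z = vec n (\<lambda>i. f i * z $ i)"
proof (rule eq_vecI)
  fix i assume "i < dim_vec (vec n (\<lambda>i. f i * z $ i))"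
  hence i: "i < n" by simp
  have "(mat_diag n f *\<^sub>v z) $ i = (\<Sum>l<n. (if i = l then f l else 0) * z $ l)"
    using i assms by (simp add: mat_diag_def)
  also have "\<dots> = (\<Sum>l<n. if l = i then f l * z $ l else 0)" by (rule sum.cong) auto
  also have "\<dots> = f i * z $ i" using i by simp
  finally show "(mat_diag n f *\<^sub>v z) $ i = vec n (\<lambda>i. f i * z $ i) $ i" using i by simp
qed (simp add: mat_diag_def)

lemma unitaryD:
  assumes "unitary_mat n U"
  shows "U \<in> carrier_mat n n" "cadj U * U = 1\<^sub>m n" "U * cadj U = 1\<^sub>m n"
  using assms unfolding unitary_mat_def by auto

lemma sum_delta1: "i < (n::nat) \<Longrightarrow> (\<Sum>l<n. (if i = l then 1 else 0) * f l) = (f i :: complex)"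
proof -
  assume i: "i < n"
  have "(\<Sum>l<n. (if i = l then 1 else 0) * f l) = (\<Sum>l<n. if l = i then f l else 0)"
    by (rule sum.cong) auto
  also have "\<dots> = f i" using i by (simp add: sum.delta)
  finally show ?thesis .
qed

lemma sum_delta2: "i < (n::nat) \<Longrightarrow> (\<Sum>l<n. f l * (if l = i then 1 else 0)) = (f i :: complex)"
proof -
  assume i: "i < n"
  have "(\<Sum>l<n. f l * (if l = i then 1 else 0)) = (\<Sum>l<n. if l = i then f l else 0)"
    by (rule sum.cong) auto
  also have "\<dots> = f i" using i by (simp add: sum.delta)
  finally show ?thesis .
qed

lemma UDU_entry:
  assumes U: "U \<in> carrier_mat n n" and ij: "i < n" "j < n"
  shows "(U * mat_diag n d * cadj U) $$ (i,j) = (\<Sum>l<n. U $$ (i,l) * d l * cnj (U $$ (j,l)))"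
proof -
  have UD: "U * mat_diag n d = mat n n (\<lambda>(i,j). U $$ (i,j) * d j)"
    by (rule mat_diag_mult_right[OF U])
  show ?thesis unfolding UD using U ij by (simp add: mult.assoc)
qed

lemma UU_entry:
  assumes U: "U \<in> carrier_mat n n" and ij: "i < n" "j < n"
  shows "(cadj U * U) $$ (i,j) = (\<Sum>l<n. cnj (U $$ (l,i)) * U $$ (l,j))"
  using U ij by simp

lemma UU_entry2:
  assumes U: "U \<in> carrier_mat n n" and ij: "i < n" "j < n"
  shows "(U * cadj U) $$ (i,j) = (\<Sum>l<n. U $$ (i,l) * cnj (U $$ (j,l)))"
  using U ij by simp

lemma ring_id4: "((a::complex) - c*x*y)*(b - c*z*t) = a*b - a*(c*z*t) - b*(c*x*y) + (c*c*x*t)*(y*z)"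
  by (simp add: algebra_simps)

lemma householder:
  fixes u :: "nat \<Rightarrow> complex" and n :: nat
  assumes n: "0 < n" and un: "(\<Sum>l<n. (cmod (u l))\<^sup>2) = 1" and u0: "u 0 = of_real r0"
  shows "\<exists>W. herm n W \<and> W * W = 1\<^sub>m n \<and> (\<forall>i<n. W $$ (i,0) = u i)"
proof -
  define w where "w l = (if l = 0 then 1 else 0) - u l" for l
  define nw where "nw = (\<Sum>l<n. (cmod (w l))\<^sup>2)"
  define c where "c = 2 / complex_of_real nw"
  define W where "W = mat n n (\<lambda>(i,j). (if i = j then 1 else 0) - c * w i * cnj (w j))"
  have Wc: "W \<in> carrier_mat n n" unfolding W_def by simp
  have cr: "cnj c = c" unfolding c_def by simp
  have Wij: "W $$ (i,j) = (if i = j then 1 else 0) - c * w i * cnj (w j)" if "i < n" "j < n" for i j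
    unfolding W_def using that by simp
  have hW: "herm n W"
  proof (rule hermI[OF Wc])
    fix i j assume ij: "i < n" "j < n"
    show "W $$ (i,j) = cnj (W $$ (j,i))" unfolding Wij[OF ij] Wij[OF ij(2,1)]
      by (simp add: cr mult.commute mult.left_commute)
  qed
  have nwsum: "(\<Sum>l<n. cnj (w l) * w l) = of_real nw"
    unfolding nw_def of_real_sum by (rule sum.cong) (simp_all only: complex_norm_square mult.commute)
  have ccnw: "c * c * of_real nw = 2 * c"
  proof (cases "nw = 0")
    case True then show ?thesis by (simp add: c_def)
  next
    case False then show ?thesis by (simp add: c_def field_simps power2_eq_square)
  qed
  have WW: "W * W = 1\<^sub>m n"
  proof (rule eq_matI)
    fix i j assume "i < dim_row (1\<^sub>m n)" "j < dim_col (1\<^sub>m n)"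
    hence ij: "i < n" "j < n" by auto
    have "(W * W) $$ (i,j) = (\<Sum>l<n. W $$ (i,l) * W $$ (l,j))" using Wc ij by simp
    also have "\<dots> = (\<Sum>l<n. ((if i = l then 1 else 0) - c * w i * cnj (w l)) * ((if l = j then 1 else 0) - c * w l * cnj (w j)))"
      using ij by (intro sum.cong) (simp_all add: Wij)
    also have "\<dots> = (\<Sum>l<n. (if i = l then 1 else 0) * (if l = j then 1 else 0)
         - (if i = l then 1 else 0) * (c * w l * cnj (w j))
         - (if l = j then 1 else 0) * (c * w i * cnj (w l))
         + (c * c * w i * cnj (w j)) * (cnj (w l) * w l))"
      by (rule sum.cong, simp, rule ring_id4)
    also have "\<dots> = (\<Sum>l<n. (if i = l then 1 else 0) * (if l = j then 1 else 0))
         - (\<Sum>l<n. (if i = l then 1 else 0) * (c * w l * cnj (w j)))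
         - (\<Sum>l<n. (c * w i * cnj (w l)) * (if l = j then 1 else 0))
         + (c * c * w i * cnj (w j)) * (\<Sum>l<n. cnj (w l) * w l)"
      by (simp add: sum.distrib sum_subtractf sum_distrib_left mult.commute)
    also have "\<dots> = (if i = j then 1 else 0) - c * w i * cnj (w j) - c * w i * cnj (w j)
          + (c * c * w i * cnj (w j)) * of_real nw"
      unfolding nwsum sum_delta1[OF ij(1)] sum_delta2[OF ij(2)] by simp
    also have "\<dots> = (if i = j then 1 else 0) - 2 * (c * w i * cnj (w j)) + (c * c * of_real nw) * (w i * cnj (w j))"
      by (simp add: algebra_simps)
    also have "\<dots> = (if i = j then 1 else 0)"
      unfolding ccnw by (simp add: algebra_simps)
    finally show "(W * W) $$ (i,j) = 1\<^sub>m n $$ (i,j)" using ij by simp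
  qed (use Wc in auto)
  have w0: "w 0 = of_real (1 - r0)" unfolding w_def u0 by simp
  have "of_real nw = (\<Sum>l<n. cnj (w l) * w l)" using nwsum by simp
  also have "\<dots> = (\<Sum>l<n. (if l = 0 then 1 else 0) - (if l = 0 then u l else 0) - (if l = 0 then cnj (u l) else 0) + cnj (u l) * u l)"
    by (rule sum.cong) (simp_all add: w_def algebra_simps)
  also have "\<dots> = 1 - u 0 - cnj (u 0) + (\<Sum>l<n. cnj (u l) * u l)"
    using n by (simp add: sum.distrib sum_subtractf)
  also have "(\<Sum>l<n. cnj (u l) * u l) = of_real (\<Sum>l<n. (cmod (u l))\<^sup>2)"
    unfolding of_real_sum by (rule sum.cong) (simp_all only: complex_norm_square mult.commute)
  finally have "of_real nw = (of_real (2 - 2 * r0) :: complex)" unfolding un u0 by simp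
  hence nw2: "nw = 2 - 2 * r0" using of_real_eq_iff by blast
  have col0: "\<forall>i<n. W $$ (i,0) = u i"
  proof (intro allI impI)
    fix i assume i: "i < n"
    show "W $$ (i,0) = u i"
    proof (cases "nw = 0")
      case True
      have "\<forall>l\<in>{..<n}. (cmod (w l))\<^sup>2 = 0"
        using True unfolding nw_def by (subst sum_nonneg_eq_0_iff[symmetric]) auto
      hence "w i = 0" using i by simp
      thus ?thesis using True i by (simp add: Wij[OF i n] c_def w_def split: if_splits)
    next
      case False
      hence r: "1 - r0 \<noteq> 0" using nw2 by simp
      have "W $$ (i,0) = (if i = 0 then 1 else 0) - (2 / of_real (2 - 2*r0)) * of_real (1 - r0) * w i"
        using Wij[OF i n] unfolding w0 c_def nw2 by (simp add: mult.commute mult.left_commute)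
      also have "(2 / of_real (2 - 2*r0)) * of_real (1 - r0) = (1::complex)"
        using r by (simp add: field_simps)
      finally show ?thesis by (simp add: w_def)
    qed
  qed
  show ?thesis using hW WW col0 by blast
qed

lemma herm_sandwich:
  assumes "herm n W" "herm n A"
  shows "herm n (W * A * W)"
proof -
  have W: "W \<in> carrier_mat n n" and A: "A \<in> carrier_mat n n" and cW: "cadj W = W" and cA: "cadj A = A"
    using assms unfolding herm_def by auto
  have WA: "W * A \<in> carrier_mat n n" using W A by simp
  have "cadj (W * A * W) = cadj W * cadj (W * A)" by (rule cadj_mult[OF WA W])
  also have "cadj (W * A) = cadj A * cadj W" by (rule cadj_mult[OF W A])
  also have "cadj W * (cadj A * cadj W) = W * (A * W)" unfolding cW cA ..
  also have "\<dots> = W * A * W" using assoc_mult_mat[OF W A W] by simp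
  finally show ?thesis unfolding herm_def using W A by simp
qed

lemma eigen_exists:
  fixes A :: "complex mat"
  assumes A: "A \<in> carrier_mat n n" and n: "0 < n"
  shows "\<exists>a v. v \<in> carrier_vec n \<and> v \<noteq> 0\<^sub>v n \<and> A *\<^sub>v v = a \<cdot>\<^sub>v v"
proof -
  obtain as where cp: "char_poly A = (\<Prod>a\<leftarrow>as. [:- a, 1:])" and len: "length as = n"
    using char_poly_factorized[OF A] by blast
  then obtain a rest where as: "as = a # rest" using n by (cases as) auto
  have "poly (char_poly A) a = 0" unfolding cp as by simp
  hence "eigenvalue A a" using eigenvalue_root_char_poly[OF A] by simp
  thus ?thesis unfolding eigenvalue_def eigenvector_def using A by auto
qed

lemma spectral:
  assumes "herm n A"
  shows "\<exists>U d. unitary_mat n U \<and> (\<forall>i. d i \<in> \<real>) \<and> A = U * mat_diag n d * cadj U"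
  using assms
proof (induction n arbitrary: A)
  case 0
  hence A: "A \<in> carrier_mat 0 0" by (simp add: herm_def)
  have u: "unitary_mat 0 (1\<^sub>m 0)" unfolding unitary_mat_def by simp
  have R: "1\<^sub>m 0 * mat_diag 0 (\<lambda>_. 0) * cadj (1\<^sub>m 0) \<in> carrier_mat 0 0"
    by (intro mult_carrier_mat[of _ 0 0]) simp_all
  have "A = 1\<^sub>m 0 * mat_diag 0 (\<lambda>_. 0) * cadj (1\<^sub>m 0)"
  proof (rule eq_matI)
    fix i j assume "i < dim_row (1\<^sub>m 0 * mat_diag 0 (\<lambda>_. 0) * cadj (1\<^sub>m 0))"
    hence False using carrier_matD(1)[OF R] by linarith
    thus "A $$ (i,j) = (1\<^sub>m 0 * mat_diag 0 (\<lambda>_. 0) * cadj (1\<^sub>m 0)) $$ (i,j)" ..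
  next
    show "dim_row A = dim_row (1\<^sub>m 0 * mat_diag 0 (\<lambda>_. 0) * cadj (1\<^sub>m 0))"
      using carrier_matD(1)[OF R] carrier_matD(1)[OF A] by linarith
    show "dim_col A = dim_col (1\<^sub>m 0 * mat_diag 0 (\<lambda>_. 0) * cadj (1\<^sub>m 0))"
      using carrier_matD(2)[OF R] carrier_matD(2)[OF A] by linarith
  qed
  note eq = this
  show ?case
    apply (rule exI[of _ "1\<^sub>m 0"], rule exI[of _ "\<lambda>_. 0"])
    apply (intro conjI)
      apply (rule u)
     apply simp
    apply (rule eq)
    done
next
  case (Suc m A)
  define n where "n = Suc m"
  have A: "A \<in> carrier_mat n n" and hA: "herm n A" using Suc.prems by (auto simp: herm_def n_def)
  obtain a v where v: "v \<in> carrier_vec n" "v \<noteq> 0\<^sub>v n" "A *\<^sub>v v = a \<cdot>\<^sub>v v"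
    using eigen_exists[OF A] n_def by auto
  have Av: "(\<Sum>l<n. A $$ (i,l) * v $ l) = a * v $ i" if i: "i < n" for i
  proof -
    have "(A *\<^sub>v v) $ i = (a \<cdot>\<^sub>v v) $ i" using v(3) by simp
    thus ?thesis using i A v(1) by simp
  qed
  obtain i0 where i0: "i0 < n" "v $ i0 \<noteq> 0"
  proof -
    have "\<exists>i<n. v $ i \<noteq> 0"
    proof (rule ccontr)
      assume "\<not> (\<exists>i<n. v $ i \<noteq> 0)"
      hence "v = 0\<^sub>v n" using v(1) by (intro eq_vecI) auto
      with v(2) show False by simp
    qed
    thus ?thesis using that by blast
  qed
  define nv where "nv = (\<Sum>l<n. (cmod (v $ l))\<^sup>2)"
  have "(cmod (v $ i0))\<^sup>2 \<le> nv" unfolding nv_def by (rule member_le_sum) (use i0 in auto)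
  moreover have "0 < (cmod (v $ i0))\<^sup>2" using i0 by simp
  ultimately have nvpos: "0 < nv" by linarith
  define ph where "ph = (if v $ 0 = 0 then 1 else cnj (v $ 0) / of_real (cmod (v $ 0)))"
  have cph: "cmod ph = 1" unfolding ph_def by (simp add: norm_divide)
  define u where "u l = ph * v $ l / of_real (sqrt nv)" for l
  have "(\<Sum>l<n. (cmod (u l))\<^sup>2) = (\<Sum>l<n. (cmod (v $ l))\<^sup>2 / nv)"
    by (rule sum.cong) (use nvpos in \<open>simp_all add: u_def norm_mult norm_divide cph power_divide\<close>)
  also have "\<dots> = 1" unfolding sum_divide_distrib[symmetric] nv_def[symmetric] using nvpos by simp
  finally have un: "(\<Sum>l<n. (cmod (u l))\<^sup>2) = 1" .
  have phv0: "ph * v $ 0 = of_real (cmod (v $ 0))"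
  proof (cases "v $ 0 = 0")
    case False
    have "ph * v $ 0 = (v $ 0 * cnj (v $ 0)) / of_real (cmod (v $ 0))" unfolding ph_def using False by simp
    also have "\<dots> = of_real ((cmod (v $ 0))\<^sup>2) / of_real (cmod (v $ 0))" unfolding complex_norm_square ..
    also have "\<dots> = of_real (cmod (v $ 0))" using False by (simp add: power2_eq_square)
    finally show ?thesis .
  qed (simp add: ph_def)
  have u0: "u 0 = of_real (cmod (v $ 0) / sqrt nv)" unfolding u_def phv0 by simp
  have Au: "(\<Sum>l<n. A $$ (i,l) * u l) = a * u i" if i: "i < n" for i
  proof -
    have "(\<Sum>l<n. A $$ (i,l) * u l) = (ph / of_real (sqrt nv)) * (\<Sum>l<n. A $$ (i,l) * v $ l)"
      unfolding sum_distrib_left by (rule sum.cong) (simp_all add: u_def)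
    also have "\<dots> = a * u i" unfolding Av[OF i] u_def by simp
    finally show ?thesis .
  qed
  have n0: "0 < n" unfolding n_def by simp
  obtain W where hW: "herm n W" and WW: "W * W = 1\<^sub>m n" and col0: "\<forall>i<n. W $$ (i,0) = u i"
    using householder[OF n0 un u0] by blast
  have Wc: "W \<in> carrier_mat n n" and cW: "cadj W = W" using hW unfolding herm_def by auto
  define B where "B = W * A * W"
  have hB: "herm n B" unfolding B_def by (rule herm_sandwich[OF hW hA])
  have Bc: "B \<in> carrier_mat n n" using hB unfolding herm_def by auto
  have Wu: "(\<Sum>l<n. W $$ (i,l) * u l) = (if i = 0 then 1 else 0)" if i: "i < n" for i
  proof -
    have "(W * W) $$ (i,0) = (\<Sum>l<n. W $$ (i,l) * W $$ (l,0))" using Wc i n0 by simp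
    also have "\<dots> = (\<Sum>l<n. W $$ (i,l) * u l)" using col0 by (intro sum.cong) auto
    finally show ?thesis using WW i n0 by simp
  qed
  have B0: "B $$ (i,0) = (if i = 0 then a else 0)" if i: "i < n" for i
  proof -
    have AW: "A * W \<in> carrier_mat n n" using A Wc by simp
    have "B = W * (A * W)" unfolding B_def using Wc A by simp
    hence "B $$ (i,0) = (\<Sum>l<n. W $$ (i,l) * (A * W) $$ (l,0))" using mult_entry[OF Wc AW i n0] by simp
    also have "\<dots> = (\<Sum>l<n. W $$ (i,l) * (\<Sum>p<n. A $$ (l,p) * W $$ (p,0)))"
      using A Wc n0 by (intro sum.cong) auto
    also have "\<dots> = (\<Sum>l<n. W $$ (i,l) * (a * u l))"
      using col0 Au by (intro sum.cong) auto
    also have "\<dots> = a * (\<Sum>l<n. W $$ (i,l) * u l)"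
      unfolding sum_distrib_left by (rule sum.cong) auto
    finally show ?thesis using Wu[OF i] by simp
  qed
  have areal: "cnj a = a" using hermD[OF hB n0 n0] B0[OF n0] by simp
  have B0': "B $$ (0,j) = (if j = 0 then a else 0)" if j: "j < n" for j
    using hermD[OF hB n0 j] B0[OF j] areal by simp
  define A' where "A' = mat m m (\<lambda>(i,j). B $$ (Suc i, Suc j))"
  have A'c: "A' \<in> carrier_mat m m" unfolding A'_def by simp
  have hA': "herm m A'"
  proof (rule hermI[OF A'c])
    fix i j assume "i < m" "j < m"
    hence ij: "Suc i < n" "Suc j < n" by (auto simp: n_def)
    show "A' $$ (i,j) = cnj (A' $$ (j,i))" using \<open>i < m\<close> \<open>j < m\<close> hermD[OF hB ij]
      unfolding A'_def by simp
  qed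
  obtain U' d' where U': "unitary_mat m U'" "\<forall>i. d' i \<in> \<real>" "A' = U' * mat_diag m d' * cadj U'"
    using Suc.IH[OF hA'] by blast
  have U'c: "U' \<in> carrier_mat m m" and U'U: "cadj U' * U' = 1\<^sub>m m" using unitaryD[OF U'(1)] by auto
  define U1 where "U1 = mat n n (\<lambda>(i,j). if i = 0 \<and> j = 0 then 1 else if i = 0 \<or> j = 0 then 0 else U' $$ (i - 1, j - 1))"
  define d where "d i = (if i = 0 then a else d' (i - 1))" for i
  have U1c: "U1 \<in> carrier_mat n n" unfolding U1_def by simp
  have U1e: "U1 $$ (i,j) = (if i = 0 \<and> j = 0 then 1 else if i = 0 \<or> j = 0 then 0 else U' $$ (i - 1, j - 1))"
    if "i < n" "j < n" for i j using that unfolding U1_def by simp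
  have U1D: "U1 * mat_diag n d * cadj U1 = B"
  proof (rule eq_matI)
    fix i j assume "i < dim_row B" "j < dim_col B"
    hence ij: "i < n" "j < n" using Bc by auto
    have "(U1 * mat_diag n d * cadj U1) $$ (i,j) = (\<Sum>l<n. U1 $$ (i,l) * d l * cnj (U1 $$ (j,l)))"
      by (rule UDU_entry[OF U1c ij])
    also have "\<dots> = U1 $$ (i,0) * d 0 * cnj (U1 $$ (j,0)) + (\<Sum>l<m. U1 $$ (i,Suc l) * d (Suc l) * cnj (U1 $$ (j,Suc l)))"
      unfolding n_def by (rule sum.lessThan_Suc_shift)
    also have "\<dots> = B $$ (i,j)"
    proof (cases i)
      case 0
      have "(\<Sum>l<m. U1 $$ (i,Suc l) * d (Suc l) * cnj (U1 $$ (j,Suc l))) = 0"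
        using 0 ij by (intro sum.neutral) (auto simp: U1e n_def)
      thus ?thesis using 0 ij B0'[OF ij(2)] by (simp add: U1e n0 d_def)
    next
      case (Suc i')
      show ?thesis
      proof (cases j)
        case 0
        have "(\<Sum>l<m. U1 $$ (i,Suc l) * d (Suc l) * cnj (U1 $$ (j,Suc l))) = 0"
          using 0 ij by (intro sum.neutral) (auto simp: U1e n_def)
        thus ?thesis using 0 Suc ij B0[OF ij(1)] by (simp add: U1e n0)
      next
        case (Suc j')
        have i'j': "i' < m" "j' < m" using ij \<open>i = Suc i'\<close> Suc by (auto simp: n_def)
        have "(\<Sum>l<m. U1 $$ (i,Suc l) * d (Suc l) * cnj (U1 $$ (j,Suc l)))
            = (\<Sum>l<m. U' $$ (i',l) * d' l * cnj (U' $$ (j',l)))"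
          using ij \<open>i = Suc i'\<close> Suc by (intro sum.cong) (auto simp: U1e n_def d_def)
        also have "\<dots> = A' $$ (i',j')" unfolding U'(3) by (rule UDU_entry[OF U'c i'j', symmetric])
        also have "\<dots> = B $$ (i,j)" unfolding A'_def using i'j' \<open>i = Suc i'\<close> Suc by simp
        finally show ?thesis using \<open>i = Suc i'\<close> Suc ij by (simp add: U1e n0)
      qed
    qed
    finally show "(U1 * mat_diag n d * cadj U1) $$ (i,j) = B $$ (i,j)" .
  qed (use Bc U1c in auto)
  have U1U: "cadj U1 * U1 = 1\<^sub>m n"
  proof (rule eq_matI)
    fix i j assume "i < dim_row (1\<^sub>m n)" "j < dim_col (1\<^sub>m n)"
    hence ij: "i < n" "j < n" by auto
    have "(cadj U1 * U1) $$ (i,j) = (\<Sum>l<n. cnj (U1 $$ (l,i)) * U1 $$ (l,j))"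
      by (rule UU_entry[OF U1c ij])
    also have "\<dots> = cnj (U1 $$ (0,i)) * U1 $$ (0,j) + (\<Sum>l<m. cnj (U1 $$ (Suc l,i)) * U1 $$ (Suc l,j))"
      unfolding n_def by (rule sum.lessThan_Suc_shift)
    also have "\<dots> = 1\<^sub>m n $$ (i,j)"
    proof (cases i)
      case 0
      have "(\<Sum>l<m. cnj (U1 $$ (Suc l,i)) * U1 $$ (Suc l,j)) = 0"
        using 0 ij by (intro sum.neutral) (auto simp: U1e n_def)
      thus ?thesis using 0 ij by (simp add: U1e n0)
    next
      case (Suc i')
      show ?thesis
      proof (cases j)
        case 0
        have "(\<Sum>l<m. cnj (U1 $$ (Suc l,i)) * U1 $$ (Suc l,j)) = 0"
          using 0 ij by (intro sum.neutral) (auto simp: U1e n_def)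
        thus ?thesis using 0 Suc ij by (simp add: U1e n0)
      next
        case (Suc j')
        have i'j': "i' < m" "j' < m" using ij \<open>i = Suc i'\<close> Suc by (auto simp: n_def)
        have "(\<Sum>l<m. cnj (U1 $$ (Suc l,i)) * U1 $$ (Suc l,j)) = (\<Sum>l<m. cnj (U' $$ (l,i')) * U' $$ (l,j'))"
          using ij \<open>i = Suc i'\<close> Suc by (intro sum.cong) (auto simp: U1e n_def)
        also have "\<dots> = (cadj U' * U') $$ (i',j')" by (rule UU_entry[OF U'c i'j', symmetric])
        also have "\<dots> = (if i' = j' then 1 else 0)" unfolding U'U using i'j' by simp
        finally show ?thesis using \<open>i = Suc i'\<close> Suc ij by (simp add: U1e n0)
      qed
    qed
    finally show "(cadj U1 * U1) $$ (i,j) = 1\<^sub>m n $$ (i,j)" .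
  qed (use U1c in auto)
  have cU1c: "cadj U1 \<in> carrier_mat n n" using U1c by simp
  have U1U2: "U1 * cadj U1 = 1\<^sub>m n" by (rule mat_mult_left_right_inverse[OF cU1c U1c U1U])
  define U where "U = W * U1"
  have Uc: "U \<in> carrier_mat n n" unfolding U_def using Wc U1c by simp
  have cU: "cadj U = cadj U1 * W" unfolding U_def cadj_mult[OF Wc U1c] cW ..
  have "cadj U * U = (cadj U1 * W) * (W * U1)" by (subst cU) (simp only: U_def)
  also have "\<dots> = cadj U1 * (W * (W * U1))" by (rule assoc_mult_mat[OF cU1c Wc mult_carrier_mat[OF Wc U1c]])
  also have "W * (W * U1) = U1" using assoc_mult_mat[OF Wc Wc U1c] WW U1c by simp
  finally have UU1: "cadj U * U = 1\<^sub>m n" using U1U by simp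
  have "U * cadj U = (W * U1) * (cadj U1 * W)" by (subst cU) (simp only: U_def)
  also have "\<dots> = W * (U1 * (cadj U1 * W))" by (rule assoc_mult_mat[OF Wc U1c mult_carrier_mat[OF cU1c Wc]])
  also have "U1 * (cadj U1 * W) = W" using assoc_mult_mat[OF U1c cU1c Wc, symmetric] U1U2 Wc by simp
  finally have UU2: "U * cadj U = 1\<^sub>m n" using WW by simp
  have Dc: "mat_diag n d \<in> carrier_mat n n" by simp
  have "U * mat_diag n d * cadj U = (W * U1) * mat_diag n d * (cadj U1 * W)"
    by (subst cU) (simp only: U_def)
  also have "\<dots> = W * (U1 * mat_diag n d) * (cadj U1 * W)"
    using assoc_mult_mat[OF Wc U1c Dc] by simp
  also have "\<dots> = W * ((U1 * mat_diag n d) * (cadj U1 * W))"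
    by (rule assoc_mult_mat[OF Wc mult_carrier_mat[OF U1c Dc] mult_carrier_mat[OF cU1c Wc]])
  also have "(U1 * mat_diag n d) * (cadj U1 * W) = (U1 * mat_diag n d * cadj U1) * W"
    by (rule assoc_mult_mat[OF mult_carrier_mat[OF U1c Dc] cU1c Wc, symmetric])
  also have "W * ((U1 * mat_diag n d * cadj U1) * W) = W * (W * A * W * W)" unfolding U1D B_def ..
  also have "\<dots> = A"
  proof -
    have WA: "W * A \<in> carrier_mat n n" using Wc A by simp
    have WAW: "W * A * W \<in> carrier_mat n n" using Wc A by simp
    have e1: "W * (W * A * W * W) = (W * (W * A * W)) * W" by (rule assoc_mult_mat[OF Wc WAW Wc, symmetric])
    have e2: "W * (W * A * W) = (W * (W * A)) * W" by (rule assoc_mult_mat[OF Wc WA Wc, symmetric])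
    have e3: "W * (W * A) = A" using assoc_mult_mat[OF Wc Wc A, symmetric] WW A by simp
    have e4: "A * W * W = A" using assoc_mult_mat[OF A Wc Wc] WW A by simp
    show ?thesis unfolding e1 e2 e3 e4 ..
  qed
  finally have dec: "A = U * mat_diag n d * cadj U" ..
  have dr: "\<forall>i. d i \<in> \<real>" unfolding d_def using U'(2) areal by (auto simp: Reals_cnj_iff)
  have "unitary_mat n U" unfolding unitary_mat_def using Uc UU1 UU2 by simp
  note uu = this[unfolded n_def] and dec' = dec[unfolded n_def]
  show ?case
    apply (rule exI[of _ U], rule exI[of _ d])
    apply (intro conjI)
      apply (rule uu)
     apply (rule dr)
    apply (rule dec')
    done
qed

definition fr :: "real \<Rightarrow> real" where "fr r = (if r > 0 then 1 / sqrt r else 0)"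

lemma inv_sqrt_supp_spec:
  assumes hA: "herm n A"
  shows "\<exists>U d. unitary_mat n U \<and> (\<forall>i. d i \<in> \<real>) \<and> A = U * mat_diag n d * cadj U \<and>
     inv_sqrt_supp A = U * mat_diag n
             (\<lambda>i. if Re (d i) > 0 then complex_of_real (1 / sqrt (Re (d i))) else 0) * cadj U"
proof -
  have dimA: "dim_row A = n" using hA unfolding herm_def by auto
  obtain U0 d0 where U0: "unitary_mat n U0" "\<forall>i. d0 i \<in> \<real>" "A = U0 * mat_diag n d0 * cadj U0"
    using spectral[OF hA] by blast
  let ?P = "\<lambda>X. \<exists>U d. unitary_mat (dim_row A) U \<and>
       (\<forall>i. d i \<in> \<real>) \<and>
       A = U * mat_diag (dim_row A) d * cadj U \<and>
       X = U * mat_diag (dim_row A)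
             (\<lambda>i. if Re (d i) > 0 then complex_of_real (1 / sqrt (Re (d i))) else 0) * cadj U"
  have ex: "\<exists>X. ?P X" unfolding dimA using U0 by blast
  have "?P (inv_sqrt_supp A)" unfolding inv_sqrt_supp_def by (rule someI_ex[OF ex])
  thus ?thesis unfolding dimA .
qed

lemma inv_sqrt_action:
  assumes hA: "herm n A" and u: "u \<in> carrier_vec n" and Au: "A *\<^sub>v u = complex_of_real r \<cdot>\<^sub>v u"
  shows "inv_sqrt_supp A *\<^sub>v u = complex_of_real (fr r) \<cdot>\<^sub>v u"
proof -
  obtain U d where U: "unitary_mat n U" and dec: "A = U * mat_diag n d * cadj U"
    and X: "inv_sqrt_supp A = U * mat_diag n
             (\<lambda>i. if Re (d i) > 0 then complex_of_real (1 / sqrt (Re (d i))) else 0) * cadj U"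
    using inv_sqrt_supp_spec[OF hA] by blast
  define f where "f = (\<lambda>i. if Re (d i) > 0 then complex_of_real (1 / sqrt (Re (d i))) else 0)"
  have Uc: "U \<in> carrier_mat n n" and UU1: "cadj U * U = 1\<^sub>m n" and UU2: "U * cadj U = 1\<^sub>m n"
    using unitaryD[OF U] by auto
  have cUc: "cadj U \<in> carrier_mat n n" using Uc by simp
  define z where "z = cadj U *\<^sub>v u"
  have zc: "z \<in> carrier_vec n" unfolding z_def using cUc u by simp
  have Dc: "mat_diag n d \<in> carrier_mat n n" "mat_diag n f \<in> carrier_mat n n" by simp_all
  have "A *\<^sub>v u = (U * mat_diag n d) *\<^sub>v z" unfolding dec z_def
    by (rule assoc_mult_mat_vec[OF mult_carrier_mat[OF Uc Dc(1)] cUc u])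
  also have "\<dots> = U *\<^sub>v (mat_diag n d *\<^sub>v z)" by (rule assoc_mult_mat_vec[OF Uc Dc(1) zc])
  finally have e1: "A *\<^sub>v u = U *\<^sub>v (mat_diag n d *\<^sub>v z)" .
  have Dz: "mat_diag n d *\<^sub>v z = complex_of_real r \<cdot>\<^sub>v z"
  proof -
    have "cadj U *\<^sub>v (A *\<^sub>v u) = (cadj U * U) *\<^sub>v (mat_diag n d *\<^sub>v z)"
      unfolding e1 by (rule assoc_mult_mat_vec[OF cUc Uc mult_mat_vec_carrier[OF Dc(1) zc], symmetric])
    also have "\<dots> = mat_diag n d *\<^sub>v z" unfolding UU1 by (rule one_mult_mat_vec[OF mult_mat_vec_carrier[OF Dc(1) zc]])
    finally have "mat_diag n d *\<^sub>v z = cadj U *\<^sub>v (complex_of_real r \<cdot>\<^sub>v u)" unfolding Au ..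
    also have "\<dots> = complex_of_real r \<cdot>\<^sub>v z" unfolding z_def by (rule mult_mat_vec[OF cUc u])
    finally show ?thesis .
  qed
  have Fz: "mat_diag n f *\<^sub>v z = complex_of_real (fr r) \<cdot>\<^sub>v z"
  proof (rule eq_vecI)
    fix i assume "i < dim_vec (complex_of_real (fr r) \<cdot>\<^sub>v z)"
    hence i: "i < n" using zc by simp
    have di: "d i * z $ i = complex_of_real r * z $ i"
    proof -
      have "(mat_diag n d *\<^sub>v z) $ i = (complex_of_real r \<cdot>\<^sub>v z) $ i" unfolding Dz ..
      thus ?thesis unfolding diag_mult_vec[OF zc] using i zc by simp
    qed
    have "f i * z $ i = complex_of_real (fr r) * z $ i"
    proof (cases "z $ i = 0")
      case False
      hence "d i = complex_of_real r" using di by simp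
      thus ?thesis unfolding f_def fr_def by simp
    qed simp
    thus "(mat_diag n f *\<^sub>v z) $ i = (complex_of_real (fr r) \<cdot>\<^sub>v z) $ i"
      unfolding diag_mult_vec[OF zc] using i zc by simp
  qed (use zc in \<open>simp add: mat_diag_def\<close>)
  have "inv_sqrt_supp A *\<^sub>v u = (U * mat_diag n f) *\<^sub>v z" unfolding X f_def[symmetric] z_def
    by (rule assoc_mult_mat_vec[OF mult_carrier_mat[OF Uc Dc(2)] cUc u])
  also have "\<dots> = U *\<^sub>v (mat_diag n f *\<^sub>v z)" by (rule assoc_mult_mat_vec[OF Uc Dc(2) zc])
  also have "\<dots> = complex_of_real (fr r) \<cdot>\<^sub>v (U *\<^sub>v z)" unfolding Fz by (rule mult_mat_vec[OF Uc zc])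
  also have "U *\<^sub>v z = u" unfolding z_def using assoc_mult_mat_vec[OF Uc cUc u, symmetric] UU2 u by simp
  finally show ?thesis .
qed

lemma inv_sqrt_carrier:
  assumes hA: "herm n A"
  shows "inv_sqrt_supp A \<in> carrier_mat n n"
proof -
  obtain U d where U: "unitary_mat n U"
    and X: "inv_sqrt_supp A = U * mat_diag n
             (\<lambda>i. if Re (d i) > 0 then complex_of_real (1 / sqrt (Re (d i))) else 0) * cadj U"
    using inv_sqrt_supp_spec[OF hA] by blast
  have Uc: "U \<in> carrier_mat n n" using unitaryD[OF U] by auto
  show ?thesis unfolding X by (rule mult_carrier_mat[OF mult_carrier_mat[OF Uc mat_diag_dim] cadj_carrier[OF Uc]])
qed

definition ee :: "nat \<Rightarrow> int \<Rightarrow> complex" where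
  "ee N m = cis (2 * pi * of_int m / of_nat N)"

lemma ee_add: "ee N (a + b) = ee N a * ee N b"
  unfolding ee_def cis_mult by (simp add: add_divide_distrib distrib_left)

lemma ee_diff: "ee N (a - b) = ee N a * cnj (ee N b)"
  unfolding ee_def cis_cnj cis_mult by (simp add: diff_divide_distrib right_diff_distrib)

lemma ee_cnj: "cnj (ee N a) = ee N (- a)"
  unfolding ee_def cis_cnj by simp

lemma ee_0[simp]: "ee N 0 = 1"
  unfolding ee_def by simp

lemma ee_dvd: assumes "0 < N" "int N dvd a" shows "ee N a = 1"
proof -
  obtain q where q: "a = int N * q" using assms(2) by blast
  have "2 * pi * of_int a / of_nat N = 2 * pi * of_int q" using assms(1) unfolding q by simp
  thus ?thesis unfolding ee_def by simp
qed

lemma ee_mod: assumes "0 < N" shows "ee N a = ee N (a mod int N)"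
proof -
  have "a = a mod int N + int N * (a div int N)" by simp
  hence "ee N a = ee N (a mod int N) * ee N (int N * (a div int N))" using ee_add by metis
  thus ?thesis using ee_dvd[OF assms] by simp
qed

lemma ee_cong: assumes "0 < N" "int N dvd (a - b)" shows "ee N a = ee N b"
proof -
  have "a = b + (a - b)" by simp
  hence "ee N a = ee N b * ee N (a - b)" using ee_add by metis
  thus ?thesis using ee_dvd[OF assms] by simp
qed

lemma ee_norm[simp]: "cnj (ee N a) * ee N a = 1"
  unfolding ee_def cis_cnj cis_mult by simp

lemma ee_ne1: assumes N: "0 < N" and nd: "\<not> int N dvd a" shows "ee N a \<noteq> 1"
proof
  assume "ee N a = 1"
  hence "cos (2 * pi * of_int a / of_nat N) = 1" unfolding ee_def by (metis cis.sel(1) one_complex.sel(1))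
  then obtain n :: int where n: "2 * pi * of_int a / of_nat N = of_int n * 2 * pi"
    using cos_one_2pi_int by blast
  hence "of_int a = (of_int n * of_nat N :: real)" using N by (simp add: field_simps)
  hence "a = n * int N" by (metis of_int_eq_iff of_int_mult of_int_of_nat_eq)
  with nd show False by simp
qed

lemma ee_char: assumes N: "0 < N"
  shows "(\<Sum>z<N. ee N (int z * a)) = (if int N dvd a then of_nat N else 0)"
proof (cases "int N dvd a")
  case True
  have "(\<Sum>z<N. ee N (int z * a)) = (\<Sum>z<N. 1)"
    by (rule sum.cong) (use True ee_dvd[OF N] in auto)
  thus ?thesis using True by simp
next
  case False
  have pw: "ee N (int z * a) = (ee N a) ^ z" for z
    unfolding ee_def DeMoivre by (simp add: field_simps)
  have "(\<Sum>z<N. ee N (int z * a)) = (\<Sum>z<N. (ee N a) ^ z)" unfolding pw ..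
  also have "\<dots> = (1 - (ee N a) ^ N) / (1 - ee N a)" using ee_ne1[OF N False] by (simp add: sum_gp_strict)
  also have "(ee N a) ^ N = 1" unfolding pw[symmetric] by (rule ee_dvd[OF N]) simp
  finally show ?thesis using False by simp
qed

definition L :: "nat \<Rightarrow> nat \<Rightarrow> nat list set" where
  "L k B = {xs. length xs = k \<and> set xs \<subseteq> {..<B}}"

lemma finite_L[simp]: "finite (L k B)"
proof -
  have "L k B = {xs. set xs \<subseteq> {..<B} \<and> length xs = k}" unfolding L_def by blast
  thus ?thesis using finite_lists_length_eq[of "{..<B}" k] by simp
qed

lemma L_0: "L 0 B = {[]}" unfolding L_def by auto

lemma L_Suc: "L (Suc k) B = (\<lambda>(x,xs). x # xs) ` ({..<B} \<times> L k B)"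
proof
  show "L (Suc k) B \<subseteq> (\<lambda>(x,xs). x # xs) ` ({..<B} \<times> L k B)"
  proof
    fix xs assume "xs \<in> L (Suc k) B"
    then obtain y ys where "xs = y # ys" "length ys = k" "y < B" "set ys \<subseteq> {..<B}"
      unfolding L_def by (cases xs) auto
    thus "xs \<in> (\<lambda>(x,xs). x # xs) ` ({..<B} \<times> L k B)" unfolding L_def by force
  qed
  show "(\<lambda>(x,xs). x # xs) ` ({..<B} \<times> L k B) \<subseteq> L (Suc k) B" unfolding L_def by auto
qed

lemma sum_L_Suc: "(\<Sum>xs\<in>L (Suc k) B. F xs) = (\<Sum>x<B. \<Sum>xs\<in>L k B. F (x # xs))"
proof -
  have inj: "inj_on (\<lambda>(x,xs). x # xs) ({..<B} \<times> L k B)" by (auto simp: inj_on_def)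
  have "(\<Sum>xs\<in>L (Suc k) B. F xs) = (\<Sum>p\<in>{..<B} \<times> L k B. F ((\<lambda>(x,xs). x # xs) p))"
    unfolding L_Suc by (rule sum.reindex[OF inj, unfolded comp_def])
  also have "\<dots> = (\<Sum>(x,xs)\<in>{..<B} \<times> L k B. F (x # xs))"
    by (rule sum.cong) auto
  also have "\<dots> = (\<Sum>x<B. \<Sum>xs\<in>L k B. F (x # xs))"
    by (rule sum.cartesian_product[symmetric])
  finally show ?thesis .
qed

lemma sum_L_0: "(\<Sum>xs\<in>L 0 B. F xs) = F []" unfolding L_0 by simp

lemma sum_split_mult: "(\<Sum>a<m * K. G a) = (\<Sum>p<m. \<Sum>a<K. G (p * K + a :: nat))"
proof -
  have "(\<Sum>a<m * K. G a) = (\<Sum>p<m. sum G {p * K ..< p * K + K})" by (rule sum.nat_group[symmetric])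
  also have "\<dots> = (\<Sum>p<m. \<Sum>a<K. G (p * K + a))"
  proof (rule sum.cong)
    fix p
    have "sum G {p * K ..< p * K + K} = sum G {0 + p * K ..< K + p * K}" by (simp add: add.commute)
    also have "\<dots> = (\<Sum>a\<in>{0..<K}. G (a + p * K))" by (rule sum.shift_bounds_nat_ivl)
    also have "\<dots> = (\<Sum>a<K. G (p * K + a))" by (simp add: lessThan_atLeast0 add.commute)
    finally show "sum G {p * K ..< p * K + K} = (\<Sum>a<K. G (p * K + a))" .
  qed simp
  finally show ?thesis .
qed

fun digs :: "nat \<Rightarrow> nat \<Rightarrow> nat \<Rightarrow> nat list" where
  "digs n 0 a = []"
| "digs n (Suc k) a = (a div n ^ k) # digs n k (a mod n ^ k)"

lemma digs_L: "a < n ^ k \<Longrightarrow> digs n k a \<in> L k n"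
proof (induction k arbitrary: a)
  case 0 thus ?case by (simp add: L_def)
next
  case (Suc k)
  have "a div n ^ k < n" using Suc.prems by (simp add: less_mult_imp_div_less mult.commute)
  moreover have "0 < n ^ k" using Suc.prems by (cases "n ^ k = 0") auto
  hence "digs n k (a mod n ^ k) \<in> L k n" by (intro Suc.IH) simp
  ultimately show ?case by (simp add: L_def)
qed

lemma sum_digs: "(\<Sum>a<n ^ k. F (digs n k a)) = (\<Sum>ds\<in>L k n. F ds)"
proof (induction k arbitrary: F)
  case 0 thus ?case by (simp add: sum_L_0)
next
  case (Suc k)
  have "(\<Sum>a<n ^ Suc k. F (digs n (Suc k) a)) = (\<Sum>p<n. \<Sum>a<n ^ k. F (digs n (Suc k) (p * n ^ k + a)))"
    unfolding power_Suc by (rule sum_split_mult)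
  also have "\<dots> = (\<Sum>p<n. \<Sum>a<n ^ k. F (p # digs n k a))"
    by (intro sum.cong refl) simp
  also have "\<dots> = (\<Sum>p<n. \<Sum>ds\<in>L k n. F (p # ds))"
    by (intro sum.cong refl Suc.IH)
  also have "\<dots> = (\<Sum>ds\<in>L (Suc k) n. F ds)" by (rule sum_L_Suc[symmetric])
  finally show ?case .
qed

lemma tpow_carrier: "A \<in> carrier_mat n n \<Longrightarrow> tpow A k \<in> carrier_mat (n ^ k) (n ^ k)"
  by (induction k) (auto simp: kron_def)

lemma tpow_Suc_entry:
  assumes A: "A \<in> carrier_mat n n" and a: "a < n ^ Suc k" and c: "c < n ^ Suc k"
  shows "tpow A (Suc k) $$ (a,c) = A $$ (a div n ^ k, c div n ^ k) * tpow A k $$ (a mod n ^ k, c mod n ^ k)"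
proof -
  have T: "tpow A k \<in> carrier_mat (n ^ k) (n ^ k)" by (rule tpow_carrier[OF A])
  have "dim_row A * dim_row (tpow A k) = n ^ Suc k" "dim_col A * dim_col (tpow A k) = n ^ Suc k"
    using A T by auto
  thus ?thesis using a c A T unfolding tpow.simps kron_def by simp
qed

lemma tpow_entry:
  assumes A: "A \<in> carrier_mat n n"
  shows "a < n ^ k \<Longrightarrow> c < n ^ k \<Longrightarrow> tpow A k $$ (a,c) = prod_list (map2 (\<lambda>p q. A $$ (p,q)) (digs n k a) (digs n k c))"
proof (induction k arbitrary: a c)
  case 0 thus ?case by simp
next
  case (Suc k)
  have "0 < n ^ k" using Suc.prems by (cases "n ^ k = 0") auto
  hence "a mod n ^ k < n ^ k" "c mod n ^ k < n ^ k" by simp_all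
  from Suc.IH[OF this] show ?case unfolding tpow_Suc_entry[OF A Suc.prems] by simp
qed

definition v1 :: "nat \<Rightarrow> nat \<Rightarrow> nat \<Rightarrow> nat \<Rightarrow> nat \<Rightarrow> complex" where
  "v1 N M s y p = (if p div N < M then complex_of_real (1 / (real N * sqrt (real M))) else 0)
      * ee N (int y * (int (p mod N) - int s * int (p div N)))"

lemma mod_cond:
  assumes N: "0 < N" and z: "z < N"
  shows "(z = (x + b * s) mod N) \<longleftrightarrow> int N dvd ((int z - int s * int b) - int x)"
proof -
  have "(z = (x + b * s) mod N) \<longleftrightarrow> (int z = int ((x + b * s) mod N))" by simp
  also have "\<dots> \<longleftrightarrow> (int z mod int N = (int x + int b * int s) mod int N)"
    using z by (simp add: of_nat_mod)
  also have "\<dots> \<longleftrightarrow> int N dvd (int z - (int x + int b * int s))" by (rule mod_eq_dvd_iff)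
  also have "int z - (int x + int b * int s) = (int z - int s * int b) - int x" by (simp add: algebra_simps)
  finally show ?thesis .
qed

lemma dvd_unique:
  assumes N: "0 < N" and x: "x < N"
  shows "int N dvd (A - int x) \<longleftrightarrow> x = nat (A mod int N)"
proof
  assume "int N dvd (A - int x)"
  hence "A mod int N = int x mod int N" by (simp add: mod_eq_dvd_iff)
  also have "\<dots> = int x" using x by simp
  finally show "x = nat (A mod int N)" by simp
next
  assume "x = nat (A mod int N)"
  hence "int x = A mod int N" using N by simp
  thus "int N dvd (A - int x)" by (simp add: mod_eq_dvd_iff)
qed

lemma rho_entry:
  assumes N: "0 < N" and M: "0 < M" and p: "p < N * N" and q: "q < N * N"
  shows "rho N M s $$ (p,q) = (\<Sum>y<N. v1 N M s y p * cnj (v1 N M s y q))"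
proof -
  define bp where "bp = p div N"
  define bq where "bq = q div N"
  define zp where "zp = p mod N"
  define zq where "zq = q mod N"
  define Ap where "Ap = int zp - int s * int bp"
  define Aq where "Aq = int zq - int s * int bq"
  define x0 where "x0 = nat (Ap mod int N)"
  have zpN: "zp < N" "zq < N" unfolding zp_def zq_def using N by simp_all
  have x0N: "x0 < N" unfolding x0_def using N by (simp add: nat_less_iff)
  have x0i: "int x0 = Ap mod int N" unfolding x0_def using N by simp
  let ?c = "complex_of_real (1 / real M)"
  define C where "C = (if bp < M \<and> bq < M then ?c else 0)"
  have phi_p: "phi N M x s $ p = (if bp < M \<and> zp = (x + bp * s) mod N then complex_of_real (1 / sqrt (real M)) else 0)" for x
    unfolding phi_def bp_def zp_def using p by simp
  have phi_q: "phi N M x s $ q = (if bq < M \<and> zq = (x + bq * s) mod N then complex_of_real (1 / sqrt (real M)) else 0)" for x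
    unfolding phi_def bq_def zq_def using q by simp
  have sq: "complex_of_real (1 / sqrt (real M)) * cnj (complex_of_real (1 / sqrt (real M))) = ?c"
    using M by (simp add: of_real_mult[symmetric] real_sqrt_mult[symmetric] del: of_real_mult)
  have "rho N M s $$ (p,q) = (1 / of_nat N) * (\<Sum>x<N. phi N M x s $ p * cnj (phi N M x s $ q))"
    unfolding rho_def using p q by simp
  also have "(\<Sum>x<N. phi N M x s $ p * cnj (phi N M x s $ q)) = (\<Sum>x<N. if x = x0 then (if int N dvd (Aq - int x0) then C else 0) else 0)"
  proof (rule sum.cong)
    fix x assume "x \<in> {..<N}"
    hence x: "x < N" by simp
    have cp: "(zp = (x + bp * s) mod N) \<longleftrightarrow> x = x0"
      unfolding mod_cond[OF N zpN(1)] Ap_def[symmetric] x0_def by (rule dvd_unique[OF N x])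
    have cq: "(zq = (x + bq * s) mod N) \<longleftrightarrow> int N dvd (Aq - int x)"
      unfolding mod_cond[OF N zpN(2)] Aq_def ..
    show "phi N M x s $ p * cnj (phi N M x s $ q) = (if x = x0 then (if int N dvd (Aq - int x0) then C else 0) else 0)"
      unfolding phi_p phi_q cp cq C_def using sq by auto
  qed simp
  also have "\<dots> = (if int N dvd (Aq - int x0) then C else 0)" using x0N by simp
  also have "int N dvd (Aq - int x0) \<longleftrightarrow> int N dvd (Ap - Aq)"
  proof -
    have "int N dvd (Ap - int x0)" unfolding x0i by (simp add: mod_eq_dvd_iff)
    hence "int N dvd (Aq - int x0) \<longleftrightarrow> int N dvd ((Aq - int x0) - (Ap - int x0))"
      by (metis dvd_diff dvd_add add.commute diff_add_cancel)
    also have "(Aq - int x0) - (Ap - int x0) = - (Ap - Aq)" by simp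
    finally show ?thesis by (simp only: dvd_minus_iff)
  qed
  finally have L: "rho N M s $$ (p,q) = (1 / of_nat N) * (if int N dvd (Ap - Aq) then C else 0)" .
  have v1p: "v1 N M s y p = (if bp < M then complex_of_real (1 / (real N * sqrt (real M))) else 0) * ee N (int y * Ap)" for y
    unfolding v1_def bp_def zp_def Ap_def ..
  have v1q: "v1 N M s y q = (if bq < M then complex_of_real (1 / (real N * sqrt (real M))) else 0) * ee N (int y * Aq)" for y
    unfolding v1_def bq_def zq_def Aq_def ..
  have cc: "complex_of_real (1 / (real N * sqrt (real M))) * cnj (complex_of_real (1 / (real N * sqrt (real M))))
      = (1 / of_nat N) * (1 / of_nat N) * ?c"
  proof -
    have s: "sqrt (real M) * sqrt (real M) = real M" using M by simp
    have r: "(1 / (real N * sqrt (real M))) * (1 / (real N * sqrt (real M))) = (1/real N) * (1/real N) * (1/real M)"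
      using s N M by (simp add: field_simps)
    show ?thesis unfolding complex_cnj_complex_of_real of_real_mult[symmetric] r by simp
  qed
  have "(\<Sum>y<N. v1 N M s y p * cnj (v1 N M s y q)) = (\<Sum>y<N. (1 / of_nat N) * (1 / of_nat N) * C * ee N (int y * (Ap - Aq)))"
  proof (rule sum.cong)
    fix y
    have e: "ee N (int y * Ap) * cnj (ee N (int y * Aq)) = ee N (int y * (Ap - Aq))"
      by (simp add: ee_diff right_diff_distrib)
    show "v1 N M s y p * cnj (v1 N M s y q) = (1 / of_nat N) * (1 / of_nat N) * C * ee N (int y * (Ap - Aq))"
      unfolding v1p v1q C_def using cc e[symmetric] by (auto simp: mult_ac)
  qed simp
  also have "\<dots> = (1 / of_nat N) * (1 / of_nat N) * C * (\<Sum>y<N. ee N (int y * (Ap - Aq)))"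
    by (simp add: sum_distrib_left)
  also have "\<dots> = (1 / of_nat N) * (if int N dvd (Ap - Aq) then C else 0)"
    unfolding ee_char[OF N] using N by simp
  finally show ?thesis using L by simp
qed

definition V :: "nat \<Rightarrow> nat \<Rightarrow> nat \<Rightarrow> nat list \<Rightarrow> nat list \<Rightarrow> complex" where
  "V N M s ys ds = prod_list (map2 (v1 N M s) ys ds)"

definition dot :: "nat \<Rightarrow> nat list \<Rightarrow> nat list \<Rightarrow> nat" where
  "dot k bs xs = (\<Sum>i<k. bs ! i * xs ! i)"

lemma dot_0[simp]: "dot 0 bs xs = 0" unfolding dot_def by simp

lemma dot_Cons[simp]: "dot (Suc k) (b # bs) (x # xs) = b * x + dot k bs xs"
  unfolding dot_def by (subst sum.lessThan_Suc_shift) simp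

definition okl :: "nat \<Rightarrow> nat \<Rightarrow> nat list \<Rightarrow> bool" where
  "okl N M ds \<longleftrightarrow> (\<forall>p\<in>set ds. p div N < M)"

definition cV :: "nat \<Rightarrow> nat \<Rightarrow> complex" where
  "cV N M = complex_of_real (1 / (real N * sqrt (real M)))"

lemma cV_real[simp]: "cnj (cV N M) = cV N M" unfolding cV_def by simp

lemma V_closed:
  "length ys = k \<Longrightarrow> length ds = k \<Longrightarrow> V N M s ys ds = (if okl N M ds then cV N M ^ k else 0) *
     ee N (int (dot k (map (\<lambda>p. p mod N) ds) ys) - int s * int (dot k (map (\<lambda>p. p div N) ds) ys))"
proof (induction k arbitrary: ys ds)
  case 0 thus ?case by (simp add: V_def okl_def)
next
  case (Suc k)
  then obtain y ys' d ds' where ys: "ys = y # ys'" and ds: "ds = d # ds'" and l: "length ys' = k" "length ds' = k"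
    by (cases ys; cases ds) auto
  have IH: "V N M s ys' ds' = (if okl N M ds' then cV N M ^ k else 0) *
     ee N (int (dot k (map (\<lambda>p. p mod N) ds') ys') - int s * int (dot k (map (\<lambda>p. p div N) ds') ys'))"
    by (rule Suc.IH[OF l])
  have Vc: "V N M s ys ds = v1 N M s y d * V N M s ys' ds'" unfolding ys ds V_def by simp
  have ie: "int ((d mod N) * y + dot k (map (\<lambda>p. p mod N) ds') ys') - int s * int ((d div N) * y + dot k (map (\<lambda>p. p div N) ds') ys')
      = int y * (int (d mod N) - int s * int (d div N)) + (int (dot k (map (\<lambda>p. p mod N) ds') ys') - int s * int (dot k (map (\<lambda>p. p div N) ds') ys'))"
    by (simp add: algebra_simps)
  define E1 where "E1 = ee N (int y * (int (d mod N) - int s * int (d div N)))"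
  define E2 where "E2 = ee N (int (dot k (map (\<lambda>p. p mod N) ds') ys') - int s * int (dot k (map (\<lambda>p. p div N) ds') ys'))"
  have eR: "ee N (int (dot (Suc k) (map (\<lambda>p. p mod N) ds) ys) - int s * int (dot (Suc k) (map (\<lambda>p. p div N) ds) ys)) = E1 * E2"
    unfolding ys ds E1_def E2_def by (simp only: list.map dot_Cons ie ee_add)
  have v: "v1 N M s y d = (if d div N < M then cV N M else 0) * E1" unfolding v1_def cV_def E1_def ..
  have ok: "okl N M ds = (d div N < M \<and> okl N M ds')" unfolding ds okl_def by simp
  show ?case unfolding Vc IH v eR ok E2_def[symmetric] by simp
qed

lemma prod_sum_lists:
  fixes g :: "nat \<Rightarrow> nat \<Rightarrow> complex"
  shows "length ds = k \<Longrightarrow> length es = k \<Longrightarrow>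
    prod_list (map2 (\<lambda>p q. \<Sum>y<B. g y p * cnj (g y q)) ds es) =
    (\<Sum>ys\<in>L k B. prod_list (map2 g ys ds) * cnj (prod_list (map2 g ys es)))"
proof (induction k arbitrary: ds es)
  case 0 thus ?case by (simp add: L_0)
next
  case (Suc k)
  then obtain d ds' e es' where ds: "ds = d # ds'" and es: "es = e # es'" and l: "length ds' = k" "length es' = k"
    by (cases ds; cases es) auto
  have "prod_list (map2 (\<lambda>p q. \<Sum>y<B. g y p * cnj (g y q)) ds es)
      = (\<Sum>y<B. g y d * cnj (g y e)) * (\<Sum>ys\<in>L k B. prod_list (map2 g ys ds') * cnj (prod_list (map2 g ys es')))"
    unfolding ds es using Suc.IH[OF l] by simp
  also have "\<dots> = (\<Sum>y<B. \<Sum>ys\<in>L k B. (g y d * cnj (g y e)) * (prod_list (map2 g ys ds') * cnj (prod_list (map2 g ys es'))))"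
    by (rule sum_product)
  also have "\<dots> = (\<Sum>y<B. \<Sum>ys\<in>L k B. prod_list (map2 g (y # ys) ds) * cnj (prod_list (map2 g (y # ys) es)))"
    unfolding ds es by (intro sum.cong refl) (simp add: mult_ac)
  also have "\<dots> = (\<Sum>ys\<in>L (Suc k) B. prod_list (map2 g ys ds) * cnj (prod_list (map2 g ys es)))"
    by (rule sum_L_Suc[symmetric])
  finally show ?case .
qed

lemma map2_cong_L:
  assumes "ds \<in> L k n" "es \<in> L k n" "\<And>p q. p < n \<Longrightarrow> q < n \<Longrightarrow> f p q = g p q"
  shows "map2 f ds es = map2 g ds es"
proof (rule map_cong[OF refl])
  fix x assume x: "x \<in> set (zip ds es)"
  obtain p q where pq: "x = (p,q)" by (cases x)
  have "p \<in> set ds" "q \<in> set es" using x pq by (auto dest: set_zip_leftD set_zip_rightD)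
  hence "p < n" "q < n" using assms(1,2) unfolding L_def by auto
  thus "case_prod f x = case_prod g x" using assms(3) pq by simp
qed

lemma rho_carrier: "rho N M s \<in> carrier_mat (N * N) (N * N)" unfolding rho_def by simp

lemma tpow_rho:
  assumes N: "0 < N" and M: "0 < M" and a: "a < (N * N) ^ k" and c: "c < (N * N) ^ k"
  shows "tpow (rho N M s) k $$ (a,c) =
    (\<Sum>ys\<in>L k N. V N M s ys (digs (N * N) k a) * cnj (V N M s ys (digs (N * N) k c)))"
proof -
  have da: "digs (N * N) k a \<in> L k (N * N)" by (rule digs_L[OF a])
  have dc: "digs (N * N) k c \<in> L k (N * N)" by (rule digs_L[OF c])
  have "tpow (rho N M s) k $$ (a,c) = prod_list (map2 (\<lambda>p q. rho N M s $$ (p,q)) (digs (N * N) k a) (digs (N * N) k c))"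
    by (rule tpow_entry[OF rho_carrier a c])
  also have "map2 (\<lambda>p q. rho N M s $$ (p,q)) (digs (N * N) k a) (digs (N * N) k c)
      = map2 (\<lambda>p q. \<Sum>y<N. v1 N M s y p * cnj (v1 N M s y q)) (digs (N * N) k a) (digs (N * N) k c)"
    by (rule map2_cong_L[OF da dc]) (rule rho_entry[OF N M])
  also have "prod_list \<dots> = (\<Sum>ys\<in>L k N. V N M s ys (digs (N * N) k a) * cnj (V N M s ys (digs (N * N) k c)))"
    unfolding V_def by (rule prod_sum_lists) (use da dc in \<open>auto simp: L_def\<close>)
  finally show ?thesis .
qed

definition comb :: "nat \<Rightarrow> nat \<Rightarrow> nat \<Rightarrow> nat" where "comb N b z = b * N + z"

lemma sum_L_split:
  "(\<Sum>ds\<in>L k (N * N). F ds) = (\<Sum>bs\<in>L k N. \<Sum>zs\<in>L k N. F (map2 (comb N) bs zs))"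
proof (induction k arbitrary: F)
  case 0 thus ?case by (simp add: sum_L_0)
next
  case (Suc k)
  have "(\<Sum>ds\<in>L (Suc k) (N * N). F ds) = (\<Sum>p<N * N. \<Sum>ds\<in>L k (N * N). F (p # ds))"
    by (rule sum_L_Suc)
  also have "\<dots> = (\<Sum>b<N. \<Sum>z<N. \<Sum>ds\<in>L k (N * N). F ((b * N + z) # ds))"
    by (rule sum_split_mult)
  also have "\<dots> = (\<Sum>b<N. \<Sum>z<N. \<Sum>bs\<in>L k N. \<Sum>zs\<in>L k N. F ((b * N + z) # map2 (comb N) bs zs))"
    by (intro sum.cong refl Suc.IH)
  also have "\<dots> = (\<Sum>b<N. \<Sum>bs\<in>L k N. \<Sum>z<N. \<Sum>zs\<in>L k N. F ((b * N + z) # map2 (comb N) bs zs))"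
    by (intro sum.cong refl sum.swap)
  also have "\<dots> = (\<Sum>b<N. \<Sum>bs\<in>L k N. \<Sum>z<N. \<Sum>zs\<in>L k N. F (map2 (comb N) (b # bs) (z # zs)))"
    by (simp add: comb_def)
  also have "\<dots> = (\<Sum>b<N. \<Sum>bs\<in>L k N. \<Sum>zs\<in>L (Suc k) N. F (map2 (comb N) (b # bs) zs))"
    by (intro sum.cong refl sum_L_Suc[symmetric])
  also have "\<dots> = (\<Sum>bs\<in>L (Suc k) N. \<Sum>zs\<in>L (Suc k) N. F (map2 (comb N) bs zs))"
    by (rule sum_L_Suc[symmetric])
  finally show ?case .
qed

lemma map_comb:
  assumes "length bs = length zs" "\<forall>z\<in>set zs. z < N"
  shows "map (\<lambda>p. p div N) (map2 (comb N) bs zs) = bs \<and> map (\<lambda>p. p mod N) (map2 (comb N) bs zs) = zs"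
  using assms
proof (induction bs zs rule: list_induct2)
  case Nil thus ?case by simp
next
  case (Cons b bs z zs)
  hence z: "z < N" by simp
  hence "(b * N + z) div N = b" "(b * N + z) mod N = z" by simp_all
  thus ?case using Cons by (simp add: comb_def)
qed

lemma okl_comb:
  assumes "length bs = length zs" "\<forall>z\<in>set zs. z < N"
  shows "okl N M (map2 (comb N) bs zs) \<longleftrightarrow> set bs \<subseteq> {..<M}"
proof -
  have "okl N M (map2 (comb N) bs zs) \<longleftrightarrow> (\<forall>b\<in>set (map (\<lambda>p. p div N) (map2 (comb N) bs zs)). b < M)"
    unfolding okl_def by simp
  also have "\<dots> \<longleftrightarrow> set bs \<subseteq> {..<M}" using map_comb[OF assms] by auto
  finally show ?thesis .
qed

lemma len_comb: "length (map2 (comb N) bs zs) = min (length bs) (length zs)" by simp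

lemma dvd_small_iff:
  assumes "y < N" "y' < N"
  shows "int N dvd (int y - int y') \<longleftrightarrow> y = y'"
proof
  assume d: "int N dvd (int y - int y')"
  have "int y mod int N = int y' mod int N" using d by (simp add: mod_eq_dvd_iff)
  thus "y = y'" using assms by simp
qed simp

lemma charL:
  assumes N: "0 < N"
  shows "ys \<in> L k N \<Longrightarrow> ys' \<in> L k N \<Longrightarrow>
    (\<Sum>zs\<in>L k N. ee N (int (dot k zs ys) - int (dot k zs ys'))) = (if ys = ys' then of_nat N ^ k else 0)"
proof (induction k arbitrary: ys ys')
  case 0
  hence "ys = []" "ys' = []" unfolding L_def by auto
  thus ?case by (simp add: L_0)
next
  case (Suc k)
  then obtain y t y' t' where ys: "ys = y # t" and ys': "ys' = y' # t'" and yt: "y < N" "t \<in> L k N" "y' < N" "t' \<in> L k N"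
    unfolding L_def by (cases ys; cases ys') auto
  have "(\<Sum>zs\<in>L (Suc k) N. ee N (int (dot (Suc k) zs ys) - int (dot (Suc k) zs ys')))
      = (\<Sum>z<N. \<Sum>zs\<in>L k N. ee N (int (dot (Suc k) (z # zs) ys) - int (dot (Suc k) (z # zs) ys')))"
    by (rule sum_L_Suc)
  also have "\<dots> = (\<Sum>z<N. \<Sum>zs\<in>L k N. ee N (int z * (int y - int y')) * ee N (int (dot k zs t) - int (dot k zs t')))"
  proof (intro sum.cong refl)
    fix z zs
    have "int (dot (Suc k) (z # zs) ys) - int (dot (Suc k) (z # zs) ys') = int z * (int y - int y') + (int (dot k zs t) - int (dot k zs t'))"
      unfolding ys ys' by (simp add: algebra_simps)
    thus "ee N (int (dot (Suc k) (z # zs) ys) - int (dot (Suc k) (z # zs) ys')) = ee N (int z * (int y - int y')) * ee N (int (dot k zs t) - int (dot k zs t'))"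
      by (simp add: ee_add)
  qed
  also have "\<dots> = (\<Sum>z<N. ee N (int z * (int y - int y'))) * (\<Sum>zs\<in>L k N. ee N (int (dot k zs t) - int (dot k zs t')))"
    by (rule sum_product[symmetric])
  also have "\<dots> = (if y = y' then of_nat N else 0) * (if t = t' then of_nat N ^ k else 0)"
    unfolding ee_char[OF N] Suc.IH[OF yt(2,4)] dvd_small_iff[OF yt(1,3)] ..
  also have "\<dots> = (if ys = ys' then of_nat N ^ Suc k else 0)" unfolding ys ys' by simp
  finally show ?case .
qed

definition U :: "nat \<Rightarrow> nat \<Rightarrow> nat list \<Rightarrow> nat \<Rightarrow> nat list \<Rightarrow> complex" where
  "U N M ys w ds = (if okl N M ds \<and> dot (length ys) (map (\<lambda>p. p div N) ds) ys mod N = w then 1 else 0)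
     * ee N (int (dot (length ys) (map (\<lambda>p. p mod N) ds) ys))"

lemma eta_card:
  assumes MN: "M \<le> N"
  shows "card {bs\<in>L k N. set bs \<subseteq> {..<M} \<and> dot k bs ys mod N = w} = eta N M k ys w"
proof -
  have "{bs\<in>L k N. set bs \<subseteq> {..<M} \<and> dot k bs ys mod N = w} =
     {bs. length bs = k \<and> set bs \<subseteq> {..<M} \<and> (\<Sum>i<k. bs ! i * ys ! i) mod N = w}"
    unfolding L_def dot_def using MN by auto
  thus ?thesis unfolding eta_def by simp
qed

lemma IP:
  assumes N: "0 < N" and MN: "M \<le> N" and ys: "ys \<in> L k N" and ys': "ys' \<in> L k N"
  shows "(\<Sum>ds\<in>L k (N * N). cnj (V N M s ys' ds) * U N M ys w ds) =
    (if ys = ys' then cV N M ^ k * of_nat N ^ k * of_nat (eta N M k ys w) * ee N (int s * int w) else 0)"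
proof -
  have lys: "length ys = k" "length ys' = k" using ys ys' unfolding L_def by auto
  define H where "H bs = (if set bs \<subseteq> {..<M} \<and> dot k bs ys mod N = w then cV N M ^ k * ee N (int s * int (dot k bs ys')) else 0)" for bs
  define E where "E zs = ee N (int (dot k zs ys) - int (dot k zs ys'))" for zs
  have "(\<Sum>ds\<in>L k (N * N). cnj (V N M s ys' ds) * U N M ys w ds)
      = (\<Sum>bs\<in>L k N. \<Sum>zs\<in>L k N. cnj (V N M s ys' (map2 (comb N) bs zs)) * U N M ys w (map2 (comb N) bs zs))"
    by (rule sum_L_split)
  also have "\<dots> = (\<Sum>bs\<in>L k N. \<Sum>zs\<in>L k N. H bs * E zs)"
  proof (intro sum.cong refl)
    fix bs zs assume bs: "bs \<in> L k N" and zs: "zs \<in> L k N"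
    have lb: "length bs = k" "length zs = k" "\<forall>z\<in>set zs. z < N" using bs zs unfolding L_def by auto
    note mc = map_comb[OF trans[OF lb(1) lb(2)[symmetric]] lb(3)]
    note ok = okl_comb[OF trans[OF lb(1) lb(2)[symmetric]] lb(3)]
    have ld: "length (map2 (comb N) bs zs) = k" using lb by simp
    have Vc: "V N M s ys' (map2 (comb N) bs zs) = (if set bs \<subseteq> {..<M} then cV N M ^ k else 0) *
        ee N (int (dot k zs ys') - int s * int (dot k bs ys'))"
      using V_closed[OF lys(2) ld, where N=N and M=M and s=s] unfolding conjunct1[OF mc] conjunct2[OF mc] ok .
    have Uc: "U N M ys w (map2 (comb N) bs zs) = (if set bs \<subseteq> {..<M} \<and> dot k bs ys mod N = w then 1 else 0) *
        ee N (int (dot k zs ys))"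
      unfolding U_def lys(1) conjunct1[OF mc] conjunct2[OF mc] ok ..
    have e: "cnj (ee N (int (dot k zs ys') - int s * int (dot k bs ys'))) * ee N (int (dot k zs ys))
        = ee N (int s * int (dot k bs ys')) * E zs"
    proof -
      have ie: "int (dot k zs ys) - (int (dot k zs ys') - int s * int (dot k bs ys'))
          = int s * int (dot k bs ys') + (int (dot k zs ys) - int (dot k zs ys'))" by simp
      have "ee N (int (dot k zs ys) - (int (dot k zs ys') - int s * int (dot k bs ys')))
          = ee N (int s * int (dot k bs ys')) * E zs" unfolding E_def by (subst ie) (rule ee_add)
      thus ?thesis by (simp add: ee_diff mult.commute)
    qed
    show "cnj (V N M s ys' (map2 (comb N) bs zs)) * U N M ys w (map2 (comb N) bs zs) = H bs * E zs"
      unfolding Vc Uc H_def using e by (auto simp: mult_ac)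
  qed
  also have "\<dots> = (\<Sum>bs\<in>L k N. H bs * (\<Sum>zs\<in>L k N. E zs))"
    by (simp add: sum_distrib_left)
  also have "(\<Sum>zs\<in>L k N. E zs) = (if ys = ys' then of_nat N ^ k else 0)"
    unfolding E_def by (rule charL[OF N ys ys'])
  finally have S: "(\<Sum>ds\<in>L k (N * N). cnj (V N M s ys' ds) * U N M ys w ds)
      = (\<Sum>bs\<in>L k N. H bs * (if ys = ys' then of_nat N ^ k else 0))" .
  show ?thesis
  proof (cases "ys = ys'")
    case False thus ?thesis using S by simp
  next
    case True
    have "(\<Sum>bs\<in>L k N. H bs) = (\<Sum>bs\<in>L k N. if set bs \<subseteq> {..<M} \<and> dot k bs ys mod N = w then cV N M ^ k * ee N (int s * int w) else 0)"
    proof (intro sum.cong refl)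
      fix bs
      have "dot k bs ys mod N = w \<Longrightarrow> ee N (int s * int (dot k bs ys)) = ee N (int s * int w)"
      proof -
        assume d: "dot k bs ys mod N = w"
        have "int (dot k bs ys) mod int N = int w" using d by (simp add: of_nat_mod[symmetric])
        hence "int N dvd (int (dot k bs ys) - int w)"
          by (metis mod_mod_trivial mod_eq_dvd_iff)
        hence "int N dvd (int s * int (dot k bs ys) - int s * int w)"
          by (metis dvd_mult right_diff_distrib)
        thus ?thesis by (rule ee_cong[OF N])
      qed
      thus "H bs = (if set bs \<subseteq> {..<M} \<and> dot k bs ys mod N = w then cV N M ^ k * ee N (int s * int w) else 0)"
        unfolding H_def True by auto
    qed
    also have "\<dots> = of_nat (card {bs\<in>L k N. set bs \<subseteq> {..<M} \<and> dot k bs ys mod N = w}) * (cV N M ^ k * ee N (int s * int w))"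
    proof -
      have ceq: "L k N \<inter> {bs. set bs \<subseteq> {..<M} \<and> dot k bs ys mod N = w} = {bs\<in>L k N. set bs \<subseteq> {..<M} \<and> dot k bs ys mod N = w}" by blast
      show ?thesis by (simp add: sum.If_cases ceq)
    qed
    also have "card {bs\<in>L k N. set bs \<subseteq> {..<M} \<and> dot k bs ys mod N = w} = eta N M k ys w"
      by (rule eta_card[OF MN])
    finally have "(\<Sum>bs\<in>L k N. H bs) = of_nat (eta N M k ys w) * (cV N M ^ k * ee N (int s * int w))" .
    thus ?thesis using S True by (simp add: sum_distrib_right[symmetric] mult_ac)
  qed
qed

lemma Sigma_entry:
  assumes N: "0 < N" and M: "0 < M" and a: "a < (N * N) ^ k" and c: "c < (N * N) ^ k"
  shows "Sigma N M k $$ (a,c) = (\<Sum>j<N. \<Sum>ys\<in>L k N. V N M j ys (digs (N * N) k a) * cnj (V N M j ys (digs (N * N) k c)))"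
  unfolding Sigma_def using a c by (simp add: tpow_rho[OF N M a c])

lemma Sigma_carrier: "Sigma N M k \<in> carrier_mat ((N * N) ^ k) ((N * N) ^ k)"
  unfolding Sigma_def by simp

lemma Sigma_herm:
  assumes N: "0 < N" and M: "0 < M"
  shows "herm ((N * N) ^ k) (Sigma N M k)"
proof (rule hermI[OF Sigma_carrier])
  fix a c assume a: "a < (N * N) ^ k" and c: "c < (N * N) ^ k"
  show "Sigma N M k $$ (a,c) = cnj (Sigma N M k $$ (c,a))"
    unfolding Sigma_entry[OF N M a c] Sigma_entry[OF N M c a] by (simp add: mult.commute)
qed

definition lam :: "nat \<Rightarrow> nat \<Rightarrow> nat \<Rightarrow> nat list \<Rightarrow> nat \<Rightarrow> real" where
  "lam N M k ys w = (1 / (real N * sqrt (real M))) ^ (2 * k) * real N ^ (k + 1) * real (eta N M k ys w)"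

lemma lam_c: "complex_of_real (lam N M k ys w) = (cV N M ^ k * cV N M ^ k) * of_nat N ^ (k + 1) * of_nat (eta N M k ys w)"
proof -
  have "(1 / (real N * sqrt (real M))) ^ (2 * k) = (1 / (real N * sqrt (real M))) ^ k * (1 / (real N * sqrt (real M))) ^ k"
    by (simp add: mult_2 power_add)
  thus ?thesis unfolding lam_def cV_def by simp
qed

lemma U_closed:
  assumes "length ys = k"
  shows "U N M ys w ds = (if okl N M ds \<and> dot k (map (\<lambda>p. p div N) ds) ys mod N = w then 1 else 0)
     * ee N (int (dot k (map (\<lambda>p. p mod N) ds) ys))"
  unfolding U_def assms ..

lemma EIG:
  assumes N: "0 < N" and M: "0 < M" and MN: "M \<le> N" and ys: "ys \<in> L k N" and w: "w < N"
    and a: "a < (N * N) ^ k"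
  shows "(\<Sum>c<(N * N) ^ k. Sigma N M k $$ (a,c) * U N M ys w (digs (N * N) k c))
       = complex_of_real (lam N M k ys w) * U N M ys w (digs (N * N) k a)"
proof -
  let ?D = "(N * N) ^ k"
  let ?da = "digs (N * N) k a"
  define K where "K j = cV N M ^ k * of_nat N ^ k * of_nat (eta N M k ys w) * ee N (int j * int w)" for j
  have lys: "length ys = k" using ys unfolding L_def by simp
  have "(\<Sum>c<?D. Sigma N M k $$ (a,c) * U N M ys w (digs (N * N) k c))
      = (\<Sum>c<?D. \<Sum>j<N. \<Sum>ys'\<in>L k N. V N M j ys' ?da * (cnj (V N M j ys' (digs (N * N) k c)) * U N M ys w (digs (N * N) k c)))"
    by (intro sum.cong refl) (simp add: Sigma_entry[OF N M a] sum_distrib_right mult.assoc)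
  also have "\<dots> = (\<Sum>j<N. \<Sum>ys'\<in>L k N. \<Sum>c<?D. V N M j ys' ?da * (cnj (V N M j ys' (digs (N * N) k c)) * U N M ys w (digs (N * N) k c)))"
    by (subst sum.swap) (intro sum.cong refl sum.swap)
  also have "\<dots> = (\<Sum>j<N. \<Sum>ys'\<in>L k N. V N M j ys' ?da * (\<Sum>ds\<in>L k (N * N). cnj (V N M j ys' ds) * U N M ys w ds))"
  proof (intro sum.cong refl)
    fix j ys'
    have SD: "(\<Sum>c<?D. cnj (V N M j ys' (digs (N * N) k c)) * U N M ys w (digs (N * N) k c)) = (\<Sum>ds\<in>L k (N * N). cnj (V N M j ys' ds) * U N M ys w ds)"
      by (rule sum_digs[where F="\<lambda>ds. cnj (V N M j ys' ds) * U N M ys w ds"])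
    show "(\<Sum>c<?D. V N M j ys' ?da * (cnj (V N M j ys' (digs (N * N) k c)) * U N M ys w (digs (N * N) k c)))
        = V N M j ys' ?da * (\<Sum>ds\<in>L k (N * N). cnj (V N M j ys' ds) * U N M ys w ds)"
      unfolding SD[symmetric] by (rule sum_distrib_left[symmetric])
  qed
  also have "\<dots> = (\<Sum>j<N. \<Sum>ys'\<in>L k N. if ys' = ys then V N M j ys ?da * K j else 0)"
    by (intro sum.cong refl) (auto simp: IP[OF N MN ys] K_def)
  also have "\<dots> = (\<Sum>j<N. V N M j ys ?da * K j)"
    using ys by (simp add: sum.delta)
  finally have S1: "(\<Sum>c<?D. Sigma N M k $$ (a,c) * U N M ys w (digs (N * N) k c)) = (\<Sum>j<N. V N M j ys ?da * K j)" .
  define dz where "dz = dot k (map (\<lambda>p. p mod N) ?da) ys"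
  define db where "db = dot k (map (\<lambda>p. p div N) ?da) ys"
  have lda: "length ?da = k" using digs_L[OF a] unfolding L_def by simp
  define C where "C = (if okl N M ?da then cV N M ^ k * (cV N M ^ k * of_nat N ^ k * of_nat (eta N M k ys w)) else 0)"
  have "(\<Sum>j<N. V N M j ys ?da * K j) = (\<Sum>j<N. C * ee N (int dz) * ee N (int j * (int w - int db)))"
  proof (intro sum.cong refl)
    fix j
    have e: "ee N (int dz - int j * int db) * ee N (int j * int w) = ee N (int dz) * ee N (int j * (int w - int db))"
    proof -
      have "int dz - int j * int db + int j * int w = int dz + int j * (int w - int db)" by (simp add: algebra_simps)
      thus ?thesis by (metis ee_add)
    qed
    show "V N M j ys ?da * K j = C * ee N (int dz) * ee N (int j * (int w - int db))"
      unfolding V_closed[OF lys lda] K_def C_def dz_def[symmetric] db_def[symmetric]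
      using e by (auto simp: mult_ac)
  qed
  also have "\<dots> = C * ee N (int dz) * (\<Sum>j<N. ee N (int j * (int w - int db)))"
    by (simp add: sum_distrib_left)
  also have "(\<Sum>j<N. ee N (int j * (int w - int db))) = (if db mod N = w then of_nat N else 0)"
  proof -
    have "int N dvd (int w - int db) \<longleftrightarrow> db mod N = w"
    proof
      assume "int N dvd (int w - int db)"
      hence "int db mod int N = int w mod int N" by (simp add: mod_eq_dvd_iff dvd_diff_commute)
      hence "int (db mod N) = int w" using w by (simp add: of_nat_mod)
      thus "db mod N = w" by simp
    next
      assume "db mod N = w"
      hence "int db mod int N = int w mod int N" using w by (simp add: of_nat_mod[symmetric])
      thus "int N dvd (int w - int db)" by (simp add: mod_eq_dvd_iff dvd_diff_commute)
    qed
    thus ?thesis unfolding ee_char[OF N] by simp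
  qed
  finally have S2: "(\<Sum>j<N. V N M j ys ?da * K j) = C * ee N (int dz) * (if db mod N = w then of_nat N else 0)" .
  have cc: "cV N M ^ k * cV N M ^ k = complex_of_real ((1 / (real N * sqrt (real M))) ^ (2 * k))"
    unfolding cV_def by (simp add: power_add[symmetric] mult_2)
  have "C * ee N (int dz) * (if db mod N = w then of_nat N else 0) = complex_of_real (lam N M k ys w) * U N M ys w ?da"
    unfolding U_closed[OF lys] C_def dz_def[symmetric] db_def[symmetric] lam_c
    by (auto simp: mult_ac)
  thus ?thesis using S1 S2 by simp
qed

lemma DEC:
  assumes N: "0 < N" and ys: "length ys = k" and ds: "length ds = k"
  shows "V N M s ys ds = cV N M ^ k * (\<Sum>w<N. ee N (- (int s * int w)) * U N M ys w ds)"
proof -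
  define dz where "dz = dot k (map (\<lambda>p. p mod N) ds) ys"
  define db where "db = dot k (map (\<lambda>p. p div N) ds) ys"
  have "(\<Sum>w<N. ee N (- (int s * int w)) * U N M ys w ds)
     = (\<Sum>w<N. if w = db mod N then (if okl N M ds then ee N (- (int s * int (db mod N))) * ee N (int dz) else 0) else 0)"
    by (intro sum.cong refl) (auto simp: U_closed[OF ys] dz_def[symmetric] db_def[symmetric])
  also have "\<dots> = (if okl N M ds then ee N (- (int s * int (db mod N))) * ee N (int dz) else 0)"
    using N by simp
  also have "ee N (- (int s * int (db mod N))) = ee N (- (int s * int db))"
  proof (rule ee_cong[OF N])
    have "int N dvd (int db - int (db mod N))" by (simp add: of_nat_mod mod_eq_dvd_iff[symmetric])
    hence "int N dvd (int s * (int db - int (db mod N)))" by simp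
    thus "int N dvd (- (int s * int (db mod N)) - - (int s * int db))" by (simp add: algebra_simps)
  qed
  finally have S: "(\<Sum>w<N. ee N (- (int s * int w)) * U N M ys w ds) = (if okl N M ds then ee N (- (int s * int db)) * ee N (int dz) else 0)" .
  have "ee N (int dz - int s * int db) = ee N (- (int s * int db)) * ee N (int dz)"
    by (metis ee_add add.commute diff_conv_add_uminus)
  thus ?thesis unfolding V_closed[OF ys ds] S dz_def[symmetric] db_def[symmetric] by simp
qed

lemma fr_eta:
  assumes T: "0 < T" and e: "0 \<le> e"
  shows "fr (T * e) * e = sqrt e / sqrt T"
proof (cases "e = 0")
  case True thus ?thesis by (simp add: fr_def)
next
  case False
  hence ep: "0 < e" using e by simp
  have "fr (T * e) * e = e / (sqrt T * sqrt e)" unfolding fr_def using T ep by (simp add: real_sqrt_mult)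
  also have se: "sqrt e * sqrt e = e" using ep by simp
  have "e / (sqrt T * sqrt e) = (sqrt e * sqrt e) / (sqrt T * sqrt e)" by (simp only: se)
  also have "\<dots> = sqrt e / sqrt T" by (rule nonzero_mult_divide_mult_cancel_right) (use ep in simp)
  finally show ?thesis .
qed

lemma kappa_sq:
  assumes N: "0 < N" and M: "0 < M"
  shows "((1 / (real N * sqrt (real M))) ^ (2 * k) * real N ^ k * (\<Sum>w<N. fr (lam N M k ys w) * real (eta N M k ys w)))\<^sup>2
       = 1 / (real M ^ k * real N ^ (k + 1)) * (\<Sum>w<N. sqrt (real (eta N M k ys w)))\<^sup>2"
proof -
  define c where "c = (1 / (real N * sqrt (real M))) ^ (2 * k)"
  define T where "T = c * real N ^ (k + 1)"
  define S where "S = (\<Sum>w<N. sqrt (real (eta N M k ys w)))"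
  have c: "c = 1 / (real N ^ (2 * k) * real M ^ k)"
  proof -
    have "c = ((1 / (real N * sqrt (real M)))\<^sup>2) ^ k" unfolding c_def by (simp add: power_mult)
    also have "(1 / (real N * sqrt (real M)))\<^sup>2 = 1 / (real N ^ 2 * real M)"
      using M by (simp add: power_divide power_mult_distrib)
    finally show ?thesis by (simp add: power_divide power_mult_distrib power_mult)
  qed
  have cpos: "0 < c" unfolding c using N M by simp
  have Tpos: "0 < T" unfolding T_def using cpos N by simp
  have "(\<Sum>w<N. fr (lam N M k ys w) * real (eta N M k ys w)) = (\<Sum>w<N. sqrt (real (eta N M k ys w)) / sqrt T)"
    by (intro sum.cong refl) (use fr_eta[OF Tpos] in \<open>simp add: lam_def T_def c_def\<close>)
  also have "\<dots> = S / sqrt T" unfolding S_def by (simp add: sum_divide_distrib)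
  finally have s: "(\<Sum>w<N. fr (lam N M k ys w) * real (eta N M k ys w)) = S / sqrt T" .
  have "(c * real N ^ k * (S / sqrt T))\<^sup>2 = c\<^sup>2 * real N ^ (2 * k) * S\<^sup>2 / T"
    using Tpos by (simp add: power_mult_distrib power_divide power_mult[symmetric] mult.commute)
  also have "\<dots> = c * real N ^ (2 * k) * S\<^sup>2 / real N ^ (k + 1)"
    unfolding T_def using cpos N by (simp add: power2_eq_square)
  also have "c * real N ^ (2 * k) = 1 / real M ^ k" unfolding c using N by simp
  finally show ?thesis unfolding s c_def[symmetric] S_def[symmetric] by simp
qed

lemma sum4_swap:
  "(\<Sum>a\<in>A. \<Sum>c\<in>C. \<Sum>y\<in>Y. \<Sum>y'\<in>Y'. f a c y y') = (\<Sum>y\<in>Y. \<Sum>y'\<in>Y'. \<Sum>a\<in>A. \<Sum>c\<in>C. (f a c y y' :: complex))"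
proof -
  have "(\<Sum>a\<in>A. \<Sum>c\<in>C. \<Sum>y\<in>Y. \<Sum>y'\<in>Y'. f a c y y') = (\<Sum>a\<in>A. \<Sum>y\<in>Y. \<Sum>c\<in>C. \<Sum>y'\<in>Y'. f a c y y')"
    by (intro sum.cong refl sum.swap)
  also have "\<dots> = (\<Sum>y\<in>Y. \<Sum>a\<in>A. \<Sum>c\<in>C. \<Sum>y'\<in>Y'. f a c y y')" by (rule sum.swap)
  also have "\<dots> = (\<Sum>y\<in>Y. \<Sum>a\<in>A. \<Sum>y'\<in>Y'. \<Sum>c\<in>C. f a c y y')"
    by (intro sum.cong refl sum.swap)
  also have "\<dots> = (\<Sum>y\<in>Y. \<Sum>y'\<in>Y'. \<Sum>a\<in>A. \<Sum>c\<in>C. f a c y y')"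
    by (intro sum.cong refl sum.swap)
  finally show ?thesis .
qed

lemma cV2: "cV N M ^ k * cV N M ^ k = complex_of_real ((1 / (real N * sqrt (real M))) ^ (2 * k))"
proof -
  have "(1 / (real N * sqrt (real M))) ^ (2 * k) = (1 / (real N * sqrt (real M))) ^ k * (1 / (real N * sqrt (real M))) ^ k"
    by (simp add: mult_2 power_add)
  thus ?thesis unfolding cV_def by simp
qed

theorem mainTheorem6:
  fixes N M k s :: nat
  assumes "0 < N" and "0 < M" and "0 < k" and "M \<le> N" and "s < N"
  shows "tr (pgm N M k s * tpow (rho N M s) k) =
    complex_of_real (1 / (real M ^ k * real N ^ (k + 1)) *
      (\<Sum>xs\<in>{xs. length xs = k \<and> set xs \<subseteq> {..<N}}.
         (\<Sum>w<N. sqrt (real (eta N M k xs w)))\<^sup>2))"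
proof -
  note N = assms(1) and M = assms(2) and MN = assms(4)
  define D where "D = (N * N) ^ k"
  define X where "X = inv_sqrt_supp (Sigma N M k)"
  define R where "R = tpow (rho N M s) k"
  define dg where "dg = digs (N * N) k"
  have hS: "herm D (Sigma N M k)" unfolding D_def by (rule Sigma_herm[OF N M])
  have Xc: "X \<in> carrier_mat D D" unfolding X_def by (rule inv_sqrt_carrier[OF hS])
  have Rc: "R \<in> carrier_mat D D" unfolding R_def D_def by (rule tpow_carrier[OF rho_carrier])
  have ldg: "length (dg a) = k" if "a < D" for a using digs_L[of a "N * N" k] that unfolding D_def dg_def L_def by simp
  have XU: "(\<Sum>c<D. X $$ (a,c) * U N M ys w (dg c)) = complex_of_real (fr (lam N M k ys w)) * U N M ys w (dg a)"
    if ys: "ys \<in> L k N" and w: "w < N" and a: "a < D" for ys w a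
  proof -
    define u where "u = vec D (\<lambda>c. U N M ys w (dg c))"
    have uc: "u \<in> carrier_vec D" unfolding u_def by simp
    have Sc: "Sigma N M k \<in> carrier_mat D D" unfolding D_def by (rule Sigma_carrier)
    have Su: "Sigma N M k *\<^sub>v u = complex_of_real (lam N M k ys w) \<cdot>\<^sub>v u"
    proof (rule eq_vecI)
      fix i assume "i < dim_vec (complex_of_real (lam N M k ys w) \<cdot>\<^sub>v u)"
      hence i: "i < D" unfolding u_def by simp
      have "(Sigma N M k *\<^sub>v u) $ i = (\<Sum>l<D. Sigma N M k $$ (i,l) * u $ l)"
        using Sc uc i by simp
      also have "\<dots> = (\<Sum>l<D. Sigma N M k $$ (i,l) * U N M ys w (dg l))"
        by (intro sum.cong refl) (simp add: u_def)
      also have "\<dots> = complex_of_real (lam N M k ys w) * U N M ys w (dg i)"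
        unfolding D_def dg_def by (rule EIG[OF N M MN ys w i[unfolded D_def]])
      finally show "(Sigma N M k *\<^sub>v u) $ i = (complex_of_real (lam N M k ys w) \<cdot>\<^sub>v u) $ i"
        using i by (simp add: u_def)
    qed (use Sc uc in simp)
    have "X *\<^sub>v u = complex_of_real (fr (lam N M k ys w)) \<cdot>\<^sub>v u"
      unfolding X_def by (rule inv_sqrt_action[OF hS uc Su])
    hence "(X *\<^sub>v u) $ a = (complex_of_real (fr (lam N M k ys w)) \<cdot>\<^sub>v u) $ a" by simp
    moreover have "(X *\<^sub>v u) $ a = (\<Sum>c<D. X $$ (a,c) * U N M ys w (dg c))"
      using Xc uc a by (simp add: u_def)
    ultimately show ?thesis using a by (simp add: u_def)
  qed
  define XV where "XV ys a = cV N M ^ k * (\<Sum>w<N. ee N (- (int s * int w)) * complex_of_real (fr (lam N M k ys w)) * U N M ys w (dg a))" for ys a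
  have XVe: "(\<Sum>b<D. X $$ (a,b) * V N M s ys (dg b)) = XV ys a" if ys: "ys \<in> L k N" and a: "a < D" for ys a
  proof -
    have lys: "length ys = k" using ys unfolding L_def by simp
    have "(\<Sum>b<D. X $$ (a,b) * V N M s ys (dg b))
        = (\<Sum>b<D. \<Sum>w<N. cV N M ^ k * ee N (- (int s * int w)) * (X $$ (a,b) * U N M ys w (dg b)))"
      by (intro sum.cong refl) (simp add: DEC[OF N lys ldg] sum_distrib_left mult_ac)
    also have "\<dots> = (\<Sum>w<N. cV N M ^ k * ee N (- (int s * int w)) * (\<Sum>b<D. X $$ (a,b) * U N M ys w (dg b)))"
      by (subst sum.swap) (simp add: sum_distrib_left)
    also have "\<dots> = (\<Sum>w<N. cV N M ^ k * ee N (- (int s * int w)) * (complex_of_real (fr (lam N M k ys w)) * U N M ys w (dg a)))"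
    proof (intro sum.cong refl)
      fix w assume "w \<in> {..<N}"
      hence w: "w < N" by simp
      show "cV N M ^ k * ee N (- (int s * int w)) * (\<Sum>b<D. X $$ (a,b) * U N M ys w (dg b))
          = cV N M ^ k * ee N (- (int s * int w)) * (complex_of_real (fr (lam N M k ys w)) * U N M ys w (dg a))"
        unfolding XU[OF ys w a] ..
    qed
    also have "\<dots> = XV ys a" unfolding XV_def by (simp add: sum_distrib_left mult_ac)
    finally show ?thesis .
  qed
  have XR: "(X * R) $$ (a,c) = (\<Sum>ys\<in>L k N. XV ys a * cnj (V N M s ys (dg c)))" if a: "a < D" and c: "c < D" for a c
  proof -
    have "(X * R) $$ (a,c) = (\<Sum>b<D. X $$ (a,b) * R $$ (b,c))" by (rule mult_entry[OF Xc Rc a c])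
    also have "\<dots> = (\<Sum>b<D. \<Sum>ys\<in>L k N. X $$ (a,b) * V N M s ys (dg b) * cnj (V N M s ys (dg c)))"
    proof (intro sum.cong refl)
      fix b assume "b \<in> {..<D}"
      hence b: "b < D" by simp
      show "X $$ (a,b) * R $$ (b,c) = (\<Sum>ys\<in>L k N. X $$ (a,b) * V N M s ys (dg b) * cnj (V N M s ys (dg c)))"
        unfolding R_def dg_def using tpow_rho[OF N M b[unfolded D_def] c[unfolded D_def]]
        by (simp add: sum_distrib_left mult_ac)
    qed
    also have "\<dots> = (\<Sum>ys\<in>L k N. (\<Sum>b<D. X $$ (a,b) * V N M s ys (dg b)) * cnj (V N M s ys (dg c)))"
      by (subst sum.swap) (simp add: sum_distrib_right)
    also have "\<dots> = (\<Sum>ys\<in>L k N. XV ys a * cnj (V N M s ys (dg c)))"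
      by (intro sum.cong refl) (simp add: XVe a)
    finally show ?thesis .
  qed
  define kap where "kap ys = (1 / (real N * sqrt (real M))) ^ (2 * k) * real N ^ k * (\<Sum>w<N. fr (lam N M k ys w) * real (eta N M k ys w))" for ys
  have K: "(\<Sum>a<D. cnj (V N M s ys' (dg a)) * XV ys a) = (if ys = ys' then complex_of_real (kap ys) else 0)"
    if ys: "ys \<in> L k N" and ys': "ys' \<in> L k N" for ys ys'
  proof -
    have "(\<Sum>a<D. cnj (V N M s ys' (dg a)) * XV ys a)
       = (\<Sum>a<D. \<Sum>w<N. cV N M ^ k * ee N (- (int s * int w)) * complex_of_real (fr (lam N M k ys w)) * (cnj (V N M s ys' (dg a)) * U N M ys w (dg a)))"
      unfolding XV_def by (intro sum.cong refl) (simp add: sum_distrib_left mult_ac)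
    also have "\<dots> = (\<Sum>w<N. cV N M ^ k * ee N (- (int s * int w)) * complex_of_real (fr (lam N M k ys w)) * (\<Sum>a<D. cnj (V N M s ys' (dg a)) * U N M ys w (dg a)))"
      by (subst sum.swap) (simp add: sum_distrib_left)
    also have "\<dots> = (\<Sum>w<N. cV N M ^ k * ee N (- (int s * int w)) * complex_of_real (fr (lam N M k ys w)) *
          (if ys = ys' then cV N M ^ k * of_nat N ^ k * of_nat (eta N M k ys w) * ee N (int s * int w) else 0))"
    proof (intro sum.cong refl)
      fix w
      have "(\<Sum>a<D. cnj (V N M s ys' (dg a)) * U N M ys w (dg a)) = (\<Sum>ds\<in>L k (N * N). cnj (V N M s ys' ds) * U N M ys w ds)"
        unfolding D_def dg_def by (rule sum_digs[where F="\<lambda>ds. cnj (V N M s ys' ds) * U N M ys w ds"])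
      thus "cV N M ^ k * ee N (- (int s * int w)) * complex_of_real (fr (lam N M k ys w)) * (\<Sum>a<D. cnj (V N M s ys' (dg a)) * U N M ys w (dg a))
          = cV N M ^ k * ee N (- (int s * int w)) * complex_of_real (fr (lam N M k ys w)) *
          (if ys = ys' then cV N M ^ k * of_nat N ^ k * of_nat (eta N M k ys w) * ee N (int s * int w) else 0)"
        using IP[OF N MN ys ys', of s w] by simp
    qed
    also have "\<dots> = (if ys = ys' then (cV N M ^ k * cV N M ^ k) * of_nat N ^ k * (\<Sum>w<N. complex_of_real (fr (lam N M k ys w)) * of_nat (eta N M k ys w)) else 0)"
    proof (cases "ys = ys'")
      case True
      have e: "ee N (- (int s * int w)) * ee N (int s * int w) = 1" for w
        using ee_add[of N "- (int s * int w)" "int s * int w"] by simp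
      have "(\<Sum>w<N. cV N M ^ k * ee N (- (int s * int w)) * complex_of_real (fr (lam N M k ys w)) *
          (cV N M ^ k * of_nat N ^ k * of_nat (eta N M k ys w) * ee N (int s * int w)))
          = (\<Sum>w<N. (cV N M ^ k * cV N M ^ k) * of_nat N ^ k * (complex_of_real (fr (lam N M k ys w)) * of_nat (eta N M k ys w)) * (ee N (- (int s * int w)) * ee N (int s * int w)))"
        by (intro sum.cong refl) (simp add: mult_ac)
      also have "\<dots> = (cV N M ^ k * cV N M ^ k) * of_nat N ^ k * (\<Sum>w<N. complex_of_real (fr (lam N M k ys w)) * of_nat (eta N M k ys w))"
        unfolding e by (simp add: sum_distrib_left)
      finally show ?thesis using True by simp
    qed simp
    also have "\<dots> = (if ys = ys' then complex_of_real (kap ys) else 0)"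
      unfolding kap_def cV2 by simp
    finally show ?thesis .
  qed
  have XRc: "X * R \<in> carrier_mat D D" using Xc Rc by simp
  have "pgm N M k s * tpow (rho N M s) k = (X * R) * (X * R)"
  proof -
    have "pgm N M k s * tpow (rho N M s) k = ((X * R) * X) * R" unfolding pgm_def X_def R_def ..
    also have "\<dots> = (X * R) * (X * R)" by (rule assoc_mult_mat[OF XRc Xc Rc])
    finally show ?thesis .
  qed
  hence "tr (pgm N M k s * tpow (rho N M s) k) = (\<Sum>a<D. ((X * R) * (X * R)) $$ (a,a))"
    unfolding tr_def using XRc Xc by simp
  also have "\<dots> = (\<Sum>a<D. \<Sum>c<D. (X * R) $$ (a,c) * (X * R) $$ (c,a))"
    by (intro sum.cong refl) (rule mult_entry[OF XRc XRc], simp_all)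
  also have "\<dots> = (\<Sum>a<D. \<Sum>c<D. \<Sum>ys\<in>L k N. \<Sum>ys'\<in>L k N. (XV ys a * cnj (V N M s ys (dg c))) * (XV ys' c * cnj (V N M s ys' (dg a))))"
    by (intro sum.cong refl) (simp add: XR sum_product)
  also have "\<dots> = (\<Sum>ys\<in>L k N. \<Sum>ys'\<in>L k N. \<Sum>a<D. \<Sum>c<D. (XV ys a * cnj (V N M s ys (dg c))) * (XV ys' c * cnj (V N M s ys' (dg a))))"
    by (rule sum4_swap)
  also have "\<dots> = (\<Sum>ys\<in>L k N. \<Sum>ys'\<in>L k N. (\<Sum>a<D. cnj (V N M s ys' (dg a)) * XV ys a) * (\<Sum>c<D. cnj (V N M s ys (dg c)) * XV ys' c))"
    by (intro sum.cong refl) (simp add: sum_product mult_ac)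
  also have "\<dots> = (\<Sum>ys\<in>L k N. \<Sum>ys'\<in>L k N. (if ys = ys' then complex_of_real (kap ys) else 0) * (if ys' = ys then complex_of_real (kap ys') else 0))"
    by (intro sum.cong refl) (simp add: K)
  also have "\<dots> = (\<Sum>ys\<in>L k N. complex_of_real (kap ys) * complex_of_real (kap ys))"
    by (intro sum.cong refl) (simp add: if_distrib sum.delta cong: if_cong)
  also have "\<dots> = complex_of_real (\<Sum>ys\<in>L k N. (kap ys)\<^sup>2)"
    by (simp add: power2_eq_square)
  also have "(\<Sum>ys\<in>L k N. (kap ys)\<^sup>2) = (\<Sum>ys\<in>L k N. 1 / (real M ^ k * real N ^ (k + 1)) * (\<Sum>w<N. sqrt (real (eta N M k ys w)))\<^sup>2)"
    unfolding kap_def by (intro sum.cong refl kappa_sq[OF N M])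
  also have "\<dots> = 1 / (real M ^ k * real N ^ (k + 1)) * (\<Sum>xs\<in>{xs. length xs = k \<and> set xs \<subseteq> {..<N}}. (\<Sum>w<N. sqrt (real (eta N M k xs w)))\<^sup>2)"
    unfolding L_def by (simp add: sum_distrib_left)
  finally show ?thesis .
qed

end
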